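(* For all integers $\alpha\ge 1$ and $n\ge 0$, \[\overline{p}\big(5^{2\alpha+1}(5n+1)\big)\equiv \overline{p}\big(5^{2\alpha+1}(5n+4)\big)\equiv 0 \pmod 5.\]
   Context: An overpartition of a nonnegative integer $n$ is a partition of $n$ in which the first occurrence of each distinct part may (or may not) be overlined; $\overline{p}(n)$ denotes the number of overpartitions of $n$ (with $\overline{p}(0)=1$). Equivalently, $\sum_{n\ge0}\overline{p}(n)q^n=\prod_{k\ge1}\frac{1+q^k}{1-q^k}$. *)

theory Defs
  imports Main "HOL-Library.Multiset"
begin

text \<open>An overpartition of n is a pair (M, S) where M is a partition of n and
S is the set of distinct parts of M whose first occurrence is overlined.\<close>

definition overpartitions :: "nat \<Rightarrow> (nat multiset \<times> nat set) set" where
  "overpartitions n = {(M, S). (\<forall>x\<in>#M. 0 < x) \<and> sum_mset M = n \<and> S \<subseteq> set_mset M}"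

definition pbar :: "nat \<Rightarrow> nat" where
  "pbar n = card (overpartitions n)"

end

theory Submission
  imports Defs "HOL-Computational_Algebra.Computational_Algebra" "HOL-Library.Numeral_Type"
begin


definition sub5 :: "'a::comm_ring_1 fps \<Rightarrow> 'a fps" where
  "sub5 A = Abs_fps (\<lambda>n. if 5 dvd n then A $ (n div 5) else 0)"

definition sect :: "nat \<Rightarrow> 'a::comm_ring_1 fps \<Rightarrow> 'a fps" where
  "sect r A = Abs_fps (\<lambda>n. A $ (5*n + r))"

lemma sub5_nth: "sub5 A $ n = (if 5 dvd n then A $ (n div 5) else 0)"
  by (simp add: sub5_def)

lemma sect_nth: "sect r A $ n = A $ (5*n + r)"
  by (simp add: sect_def)

lemma sect_add: "sect r (A + B) = sect r A + sect r B"
  by (rule fps_ext) (simp add: sect_nth)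

lemma sect_diff: "sect r (A - B) = sect r A - sect r B"
  by (rule fps_ext) (simp add: sect_nth)

lemma sect_0: "sect r 0 = 0"
  by (rule fps_ext) (simp add: sect_nth)

lemma sect_sum: "sect r (sum f S) = (\<Sum>i\<in>S. sect r (f i))"
  by (induction S rule: infinite_finite_induct) (auto simp: sect_0 sect_add)

lemma decomp5: "A = (\<Sum>i<5. fps_X^i * sub5 (sect i A))"
proof (rule fps_ext)
  fix n
  have "(\<Sum>i<5. fps_X^i * sub5 (sect i A)) $ n = (\<Sum>i<5. (fps_X^i * sub5 (sect i A)) $ n)"
    by (simp add: fps_sum_nth)
  also have "\<dots> = (\<Sum>i<5. if i = n mod 5 then A $ n else 0)"
  proof (rule sum.cong[OF refl])
    fix i assume i: "i \<in> {..<5::nat}"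
    show "(fps_X^i * sub5 (sect i A)) $ n = (if i = n mod 5 then A $ n else 0)"
    proof (cases "i = n mod 5")
      case True
      then have "i \<le> n" by simp
      moreover have "5 dvd (n - i)" using True by (simp add: minus_mod_eq_mult_div)
      moreover have "5 * ((n - i) div 5) + i = n" using True by (simp add: minus_mod_eq_mult_div)
      ultimately show ?thesis using True
        by (simp add: fps_X_power_mult_nth sub5_nth sect_nth)
    next
      case False
      have "\<not> (i \<le> n \<and> 5 dvd (n - i))"
      proof
        assume "i \<le> n \<and> 5 dvd (n - i)"
        then obtain k where "n - i = 5 * k" "i \<le> n" by (auto elim: dvdE)
        then have "n = 5 * k + i" by simp
        then have "n mod 5 = i" using i by simp
        with False show False by simp
      qed
      then show ?thesis using False
        by (auto simp: fps_X_power_mult_nth sub5_nth sect_nth)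
    qed
  qed
  also have "\<dots> = A $ n" by (simp add: sum.delta)
  finally show "A $ n = (\<Sum>i<5. fps_X^i * sub5 (sect i A)) $ n" by simp
qed

lemma sect_X_sub5:
  assumes "r < 5"
  shows "sect r (fps_X^s * sub5 C) = (if s mod 5 = r then fps_X^(s div 5) * C else 0)"
proof (rule fps_ext)
  fix n
  have L: "sect r (fps_X^s * sub5 C) $ n = (if s \<le> 5*n+r then sub5 C $ (5*n+r-s) else 0)"
    by (simp add: sect_nth fps_X_power_mult_nth)
  show "sect r (fps_X^s * sub5 C) $ n = (if s mod 5 = r then fps_X^(s div 5) * C else 0) $ n"
  proof (cases "s mod 5 = r")
    case True
    obtain q where s: "s = 5 * q + r"
    proof
      show "s = 5 * (s div 5) + r" using True mod_mult_div_eq[of s 5] by linarith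
    qed
    have q: "s div 5 = q" using s assms by simp
    show ?thesis
    proof (cases "q \<le> n")
      case True2: True
      have e: "5 * n + r - s = 5 * (n - q)" using True2 s
        by (simp add: diff_mult_distrib2)
      have "s \<le> 5*n+r" using True2 s by simp
      then have "sect r (fps_X^s * sub5 C) $ n = sub5 C $ (5 * (n - q))"
        unfolding L e[symmetric] by simp
      also have "\<dots> = C $ (n - q)" by (simp add: sub5_nth)
      also have "\<dots> = (fps_X^q * C) $ n" using True2 by (simp add: fps_X_power_mult_nth)
      finally show ?thesis using True q by simp
    next
      case False
      then have "\<not> s \<le> 5 * n + r" using s by linarith
      then show ?thesis unfolding L using True False q
        by (simp add: fps_X_power_mult_nth)
    qed
  next
    case False
    have "\<not> (s \<le> 5 * n + r \<and> 5 dvd (5 * n + r - s))"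
    proof
      assume "s \<le> 5 * n + r \<and> 5 dvd (5 * n + r - s)"
      then obtain k where k: "5 * n + r - s = 5 * k" "s \<le> 5 * n + r" by (auto elim: dvdE)
      then have "5 * n + r = s + 5 * k" by simp
      then have eq: "5 * n + r = s + 5 * k" .
      have "s mod 5 = (s + 5*k) mod 5" by simp
      also have "\<dots> = (5*n + r) mod 5" using eq by simp
      also have "\<dots> = r" using assms by simp
      finally show False using False by simp
    qed
    then have "sect r (fps_X^s * sub5 C) $ n = 0" unfolding L sub5_nth by auto
    then show ?thesis using False by simp
  qed
qed

lemma sum_mult5:
  fixes f :: "nat \<Rightarrow> 'a::comm_monoid_add"
  assumes "\<And>i. i \<le> 5 * m \<Longrightarrow> \<not> 5 dvd i \<Longrightarrow> f i = 0"
  shows "(\<Sum>i=0..5*m. f i) = (\<Sum>j=0..m. f (5 * j))"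
proof -
  have "(\<Sum>i=0..5*m. f i) = (\<Sum>i\<in>(\<lambda>j. 5 * j) ` {0..m}. f i)"
  proof (rule sum.mono_neutral_right)
    show "\<forall>i\<in>{0..5 * m} - (\<lambda>j. 5 * j) ` {0..m}. f i = 0"
    proof
      fix i assume i: "i \<in> {0..5 * m} - (\<lambda>j. 5 * j) ` {0..m}"
      have "\<not> 5 dvd i"
      proof
        assume "5 dvd i"
        then obtain k where "i = 5 * k" by (auto elim: dvdE)
        with i show False by auto
      qed
      with i show "f i = 0" by (intro assms) auto
    qed
  qed auto
  also have "\<dots> = (\<Sum>j=0..m. f (5 * j))"
    by (subst sum.reindex) (auto simp: inj_on_def)
  finally show ?thesis .
qed

lemma sub5_mult: "sub5 (A * B) = sub5 A * sub5 B"
proof (rule fps_ext)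
  fix n
  show "sub5 (A * B) $ n = (sub5 A * sub5 B) $ n"
  proof (cases "5 dvd n")
    case True
    then obtain m where n: "n = 5 * m" by (auto elim: dvdE)
    have "(sub5 A * sub5 B) $ n = (\<Sum>i=0..5*m. sub5 A $ i * sub5 B $ (5*m - i))"
      by (simp add: fps_mult_nth n)
    also have "\<dots> = (\<Sum>j=0..m. sub5 A $ (5*j) * sub5 B $ (5*m - 5*j))"
      by (rule sum_mult5) (simp add: sub5_nth)
    also have "\<dots> = (\<Sum>j=0..m. A $ j * B $ (m - j))"
    proof (rule sum.cong[OF refl])
      fix j assume "j \<in> {0..m}"
      then have "5 * m - 5 * j = 5 * (m - j)" by (simp add: diff_mult_distrib2)
      then show "sub5 A $ (5*j) * sub5 B $ (5*m - 5*j) = A $ j * B $ (m - j)"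
        by (simp add: sub5_nth)
    qed
    also have "\<dots> = sub5 (A * B) $ n" by (simp add: sub5_nth n fps_mult_nth)
    finally show ?thesis by simp
  next
    case False
    have "(sub5 A * sub5 B) $ n = (\<Sum>i=0..n. sub5 A $ i * sub5 B $ (n - i))"
      by (simp add: fps_mult_nth)
    also have "\<dots> = 0"
    proof (rule sum.neutral, rule ballI)
      fix i assume "i \<in> {0..n}"
      then have "\<not> (5 dvd i \<and> 5 dvd (n - i))" using False
        by (metis atLeastAtMost_iff dvd_add le_add_diff_inverse)
      then show "sub5 A $ i * sub5 B $ (n - i) = 0" by (auto simp: sub5_nth)
    qed
    finally show ?thesis using False by (simp add: sub5_nth)
  qed
qed

lemma sub5_add: "sub5 (A + B) = sub5 A + sub5 B"
  by (rule fps_ext) (simp add: sub5_nth)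

lemma sub5_one: "sub5 1 = 1"
  by (rule fps_ext) (auto simp: sub5_nth elim: dvdE)

lemma sub5_power: "sub5 (A ^ k) = sub5 A ^ k"
  by (induction k) (simp_all add: sub5_one sub5_mult)

lemma sect_sub5: "r < 5 \<Longrightarrow> sect r (sub5 C) = (if r = 0 then C else 0)"
  using sect_X_sub5[of r 0 C] by simp

lemma sect_mult:
  assumes "r < 5"
  shows "sect r (A * B) = (\<Sum>i<5. \<Sum>j<5. if (i + j) mod 5 = r
           then fps_X^((i + j) div 5) * (sect i A * sect j B) else 0)"
proof -
  have "A * B = (\<Sum>i<5. fps_X^i * sub5 (sect i A)) * (\<Sum>j<5. fps_X^j * sub5 (sect j B))"
    by (subst decomp5[of A], subst decomp5[of B]) (rule refl)
  also have "\<dots> = (\<Sum>i<5. \<Sum>j<5. fps_X^(i+j) * sub5 (sect i A * sect j B))"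
    by (simp add: sum_product sub5_mult power_add mult_ac)
  finally have "sect r (A * B) = sect r (\<Sum>i<5. \<Sum>j<5. fps_X^(i+j) * sub5 (sect i A * sect j B))"
    by simp
  also have "\<dots> = (\<Sum>i<5. \<Sum>j<5. sect r (fps_X^(i+j) * sub5 (sect i A * sect j B)))"
    by (simp add: sect_sum)
  also have "\<dots> = (\<Sum>i<5. \<Sum>j<5. if (i + j) mod 5 = r
           then fps_X^((i + j) div 5) * (sect i A * sect j B) else 0)"
    using assms by (simp add: sect_X_sub5)
  finally show ?thesis .
qed


lemma eqto_mult:
  assumes "\<forall>i<M. A $ i = B $ i" "\<forall>i<M. C $ i = D $ i"
  shows "\<forall>i<M. (A * C) $ i = (B * D) $ i"
  using assms by (auto simp: fps_mult_nth intro!: sum.cong)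

lemma eqto_power:
  assumes "\<forall>i<M. A $ i = B $ i"
  shows "\<forall>i<M. (A ^ k) $ i = (B ^ k) $ i"
  by (induction k) (simp_all add: eqto_mult[OF assms])

definition trunc :: "nat \<Rightarrow> 'a::comm_ring_1 fps \<Rightarrow> 'a fps" where
  "trunc N A = (\<Sum>i\<le>N. fps_const (A $ i) * fps_X ^ i)"

lemma trunc_nth: "trunc N A $ n = (if n \<le> N then A $ n else 0)"
  by (simp add: trunc_def fps_sum_nth if_distrib[of "\<lambda>x. _ * x"] cong: if_cong)

lemma frob_fps:
  fixes A :: "'a::comm_ring_1 fps"
  assumes p: "prime CHAR('a)" "CHAR('a) = 5"
    and fix5: "\<And>x::'a. x ^ 5 = x"
  shows "A ^ 5 = sub5 A"
proof (rule fps_ext)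
  fix n
  have pf: "prime CHAR('a fps)" "CHAR('a fps) = 5" using p by simp_all
  have "\<forall>i<Suc n. A $ i = trunc n A $ i" by (simp add: trunc_nth)
  then have "(A ^ 5) $ n = (trunc n A ^ 5) $ n" using eqto_power by blast
  also have "trunc n A ^ 5 = (\<Sum>i\<le>n. (fps_const (A $ i) * fps_X ^ i) ^ 5)"
    unfolding trunc_def by (rule freshmans_dream_sum) (use pf in auto)
  also have "\<dots> = (\<Sum>i\<le>n. fps_const (A $ i) * fps_X ^ (5 * i))"
    by (simp add: power_mult_distrib fps_const_power fix5 power_mult mult.commute)
  also have "(\<dots>) $ n = (\<Sum>i\<le>n. if n = 5 * i then A $ i else 0)"
    by (simp add: fps_sum_nth if_distrib[of "\<lambda>x. _ * x"] cong: if_cong)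
  also have "\<dots> = sub5 A $ n"
  proof (cases "5 dvd n")
    case True
    then obtain m where m: "n = 5 * m" by (auto elim: dvdE)
    have "(\<Sum>i\<le>n. if n = 5 * i then A $ i else 0) = (\<Sum>i\<le>n. if i = m then A $ i else 0)"
      by (rule sum.cong) (auto simp: m)
    also have "\<dots> = A $ m" using m by simp
    finally show ?thesis using m by (simp add: sub5_nth)
  next
    case False
    then have "(\<Sum>i\<le>n. if n = 5 * i then A $ i else 0) = 0"
      by (intro sum.neutral) auto
    then show ?thesis using False by (simp add: sub5_nth)
  qed
  finally show "(A ^ 5) $ n = sub5 A $ n" .
qed

lemma fix5_type: "(x::5) ^ 5 = x"
proof (induction x)
  case (of_int z)
  then have "z = 0 \<or> z = 1 \<or> z = 2 \<or> z = 3 \<or> z = 4" by auto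
  then show ?case by (auto simp: of_int_power[symmetric] simp del: of_int_power)
qed

lemma frob5: "(A :: 5 fps) ^ 5 = sub5 A"
  by (rule frob_fps) (auto simp: fix5_type)


lemma sq_mod5_cases:
  fixes x :: int
  shows "x^2 mod 5 = (if x mod 5 = 0 then 0 else if x mod 5 = 1 \<or> x mod 5 = 4 then 1 else 4)"
proof -
  have "x^2 mod 5 = (x mod 5)^2 mod 5" by (simp add: power_mod)
  moreover have "x mod 5 \<in> {0,1,2,3,4}" by auto
  ultimately show ?thesis by auto
qed

definition F5 :: "int \<times> int \<Rightarrow> int \<times> int" where
  "F5 p = (let u = fst p; v = snd p in
     if (u + 2*v) mod 5 \<in> {2,3} then (2*u - v, u + 2*v) else (u + 2*v, 2*u - v))"

definition G5 :: "int \<times> int \<Rightarrow> int \<times> int" where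
  "G5 p = (let x = fst p; y = snd p in
     if (y - 2*x) mod 5 = 0 then ((x + 2*y) div 5, (2*x - y) div 5)
     else ((2*x + y) div 5, (2*y - x) div 5))"

lemma F5_norm: "(fst (F5 (u,v)))^2 + (snd (F5 (u,v)))^2 = 5 * (u^2 + v^2)"
  by (auto simp: F5_def Let_def power2_eq_square algebra_simps)

definition S0 :: "nat \<Rightarrow> (int \<times> int) set" where
  "S0 n = {(x,y). x mod 5 = 0 \<and> y mod 5 = 0 \<and> x^2 + y^2 = 5 * int n}"
definition S1 :: "nat \<Rightarrow> (int \<times> int) set" where
  "S1 n = {(x,y). x^2 mod 5 = 1 \<and> y^2 mod 5 = 4 \<and> x^2 + y^2 = 5 * int n}"

lemma GF5: "G5 (F5 (u,v)) = (u,v)"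
proof (cases "(u + 2*v) mod 5 \<in> {2,3}")
  case True
  then have F: "F5 (u,v) = (2*u - v, u + 2*v)" by (simp add: F5_def)
  have c: "((u + 2*v) - 2*(2*u - v)) mod 5 \<noteq> 0" using True by auto presburger+
  have e1: "2*(2*u - v) + (u + 2*v) = 5 * u" by simp
  have e2: "2*(u + 2*v) - (2*u - v) = 5 * v" by simp
  show ?thesis unfolding F G5_def Let_def using c by (simp only: fst_conv snd_conv e1 e2 if_False) simp
next
  case False
  then have F: "F5 (u,v) = (u + 2*v, 2*u - v)" by (simp add: F5_def)
  have c: "((2*u - v) - 2*(u + 2*v)) mod 5 = 0" by presburger
  have e1: "(u + 2*v) + 2*(2*u - v) = 5 * u" by simp
  have e2: "2*(u + 2*v) - (2*u - v) = 5 * v" by simp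
  show ?thesis unfolding F G5_def Let_def using c by (simp only: fst_conv snd_conv e1 e2 if_True) simp
qed

lemma FG5:
  assumes "(x,y) \<in> S0 n \<union> S1 n"
  shows "F5 (G5 (x,y)) = (x,y)"
proof -
  have xr: "x mod 5 = 0 \<or> x mod 5 = 1 \<or> x mod 5 = 4" and
       yr: "(x mod 5 = 0 \<and> y mod 5 = 0) \<or> ((x mod 5 = 1 \<or> x mod 5 = 4) \<and> (y mod 5 = 2 \<or> y mod 5 = 3))"
    using assms sq_mod5_cases[of x] sq_mod5_cases[of y]
    by (auto simp: S0_def S1_def split: if_splits)
  show ?thesis
  proof (cases "(y - 2*x) mod 5 = 0")
    case True
    have "5 dvd (x + 2*y)" using True by presburger
    then obtain u where u: "x + 2*y = 5 * u" by (auto elim: dvdE)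
    have "5 dvd (2*x - y)" using True by presburger
    then obtain v where v: "2*x - y = 5 * v" by (auto elim: dvdE)
    have G: "G5 (x,y) = (u, v)" using True u v by (simp add: G5_def)
    have ux: "u + 2*v = x" using u v by linarith
    have uy: "2*u - v = y" using u v by linarith
    have "\<not> (x mod 5 \<in> {2,3})" using xr by auto
    then show ?thesis unfolding G F5_def Let_def using ux uy by simp
  next
    case False
    have yr2: "y mod 5 = 2 \<or> y mod 5 = 3" using yr False by presburger
    have "5 dvd (2*x + y)" using False yr by presburger
    then obtain u where u: "2*x + y = 5 * u" by (auto elim: dvdE)
    have "5 dvd (2*y - x)" using False yr by presburger
    then obtain v where v: "2*y - x = 5 * v" by (auto elim: dvdE)
    have G: "G5 (x,y) = (u, v)" using False u v by (simp add: G5_def)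
    have ux: "u + 2*v = y" using u v by linarith
    have uy: "2*u - v = x" using u v by linarith
    show ?thesis unfolding G F5_def Let_def using ux uy yr2 by auto
  qed
qed

lemma F5_in:
  assumes "u^2 + v^2 = int n"
  shows "F5 (u,v) \<in> S0 n \<union> S1 n"
proof -
  define x where "x = u + 2*v"
  define y where "y = 2*u - v"
  have nrm: "x^2 + y^2 = 5 * int n" using assms unfolding x_def y_def
    by (simp add: power2_eq_square algebra_simps)
  have yx: "(y - 2*x) mod 5 = 0" unfolding x_def y_def by presburger
  show ?thesis
  proof (cases "x mod 5 \<in> {2,3}")
    case True
    then have F: "F5 (u,v) = (y, x)" by (simp add: F5_def x_def y_def)
    have "y mod 5 = 1 \<or> y mod 5 = 4" using True yx by auto presburger+
    then have "y^2 mod 5 = 1" "x^2 mod 5 = 4" using True sq_mod5_cases[of x] sq_mod5_cases[of y] by auto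
    then show ?thesis unfolding F S1_def using nrm by (simp add: add.commute)
  next
    case False
    then have F: "F5 (u,v) = (x, y)" by (simp add: F5_def x_def y_def)
    have "x mod 5 = 0 \<or> x mod 5 = 1 \<or> x mod 5 = 4" using False by auto
    then show ?thesis
    proof (elim disjE)
      assume "x mod 5 = 0"
      moreover then have "y mod 5 = 0" using yx by presburger
      ultimately show ?thesis unfolding F S0_def using nrm by simp
    next
      assume h: "x mod 5 = 1"
      then have "y mod 5 = 2" using yx by presburger
      then show ?thesis unfolding F S1_def using nrm h sq_mod5_cases[of x] sq_mod5_cases[of y] by simp
    next
      assume h: "x mod 5 = 4"
      then have "y mod 5 = 3" using yx by presburger
      then show ?thesis unfolding F S1_def using nrm h sq_mod5_cases[of x] sq_mod5_cases[of y] by simp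
    qed
  qed
qed

lemma abs_le_sq: "\<bar>x::int\<bar> \<le> x^2"
proof (cases "x = 0")
  case False
  then have "1 \<le> \<bar>x\<bar>" by linarith
  then have "\<bar>x\<bar> * 1 \<le> \<bar>x\<bar> * \<bar>x\<bar>" by (intro mult_left_mono) auto
  then show ?thesis by (simp add: power2_eq_square abs_mult_self_eq)
qed simp

lemma finite_pairs: "finite {(x::int, y::int). x^2 + y^2 = m}"
proof -
  have "{(x::int, y::int). x^2 + y^2 = m} \<subseteq> {-\<bar>m\<bar>..\<bar>m\<bar>} \<times> {-\<bar>m\<bar>..\<bar>m\<bar>}"
  proof (rule subsetI)
    fix p assume "p \<in> {(x::int, y::int). x^2 + y^2 = m}"
    then obtain x y where p: "p = (x,y)" and h: "x^2 + y^2 = m" by auto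
    have "\<bar>x\<bar> \<le> x^2" "\<bar>y\<bar> \<le> y^2" by (rule abs_le_sq)+
    moreover have "0 \<le> x^2" "0 \<le> y^2" by simp_all
    ultimately show "p \<in> {-\<bar>m\<bar>..\<bar>m\<bar>} \<times> {-\<bar>m\<bar>..\<bar>m\<bar>}" using h p by auto
  qed
  then show ?thesis by (rule finite_subset) simp
qed

lemma lattice_count:
  "card {(u::int, v::int). u^2 + v^2 = int n}
     = card {(x::int, y::int). 5*x^2 + 5*y^2 = int n} + card (S1 n)"
proof -
  let ?A = "{(u::int, v::int). u^2 + v^2 = int n}"
  have bij: "bij_betw F5 ?A (S0 n \<union> S1 n)"
  proof (rule bij_betw_byWitness[where f' = G5])
    show "\<forall>a\<in>?A. G5 (F5 a) = a" by (auto simp: GF5)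
    show "\<forall>b\<in>S0 n \<union> S1 n. F5 (G5 b) = b" using FG5 by fast
    show "F5 ` ?A \<subseteq> S0 n \<union> S1 n"
    proof (rule image_subsetI)
      fix p assume "p \<in> ?A"
      then obtain u v where p: "p = (u,v)" "u^2 + v^2 = int n" by auto
      then show "F5 p \<in> S0 n \<union> S1 n" using F5_in by simp
    qed
    show "G5 ` (S0 n \<union> S1 n) \<subseteq> ?A"
    proof (rule image_subsetI)
      fix p assume "p \<in> S0 n \<union> S1 n"
      then obtain x y where pxy: "p = (x,y)" and h: "(x, y) \<in> S0 n \<union> S1 n" by (cases p) auto
      obtain u v where G: "G5 (x,y) = (u,v)" by fastforce
      have F: "F5 (u,v) = (x,y)" using FG5[OF h] G by simp
      have "5 * (u^2 + v^2) = x^2 + y^2" using F5_norm[of u v] F by simp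
      also have "\<dots> = 5 * int n" using h by (auto simp: S0_def S1_def)
      finally show "G5 p \<in> ?A" using G pxy by simp
    qed
  qed
  have fin5: "finite {(x::int, y::int). x^2 + y^2 = 5 * int n}" by (rule finite_pairs)
  have f0: "finite (S0 n)" by (rule finite_subset[OF _ fin5]) (auto simp: S0_def)
  have f1: "finite (S1 n)" by (rule finite_subset[OF _ fin5]) (auto simp: S1_def)
  have disj: "S0 n \<inter> S1 n = {}"
    using sq_mod5_cases by (auto simp: S0_def S1_def)
  have c0: "card (S0 n) = card {(x::int, y::int). 5*x^2 + 5*y^2 = int n}"
  proof -
    have "S0 n = (\<lambda>(x,y). (5*x, 5*y)) ` {(x::int, y::int). 5*x^2 + 5*y^2 = int n}"
    proof (rule set_eqI, rule iffI)
      fix p assume "p \<in> S0 n"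
      then obtain x y where p: "p = (x,y)" "x mod 5 = 0" "y mod 5 = 0" "x^2 + y^2 = 5 * int n"
        by (auto simp: S0_def)
      obtain a where a: "x = 5 * a" using p by (auto elim!: dvdE simp: mod_eq_0_iff_dvd)
      obtain b where b: "y = 5 * b" using p by (auto elim!: dvdE simp: mod_eq_0_iff_dvd)
      have "5 * (5*a^2 + 5*b^2) = 5 * int n" using p(4) a b by (simp add: power2_eq_square algebra_simps)
      then have "5*a^2 + 5*b^2 = int n" by simp
      then show "p \<in> (\<lambda>(x,y). (5*x, 5*y)) ` {(x::int, y::int). 5*x^2 + 5*y^2 = int n}"
        using p a b by auto
    next
      fix p assume "p \<in> (\<lambda>(x,y). (5*x, 5*y)) ` {(x::int, y::int). 5*x^2 + 5*y^2 = int n}"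
      then obtain a b where p: "p = (5*a, 5*b)" "5*a^2 + 5*b^2 = int n" by auto
      have "(5*a)^2 + (5*b)^2 = 5 * (5*a^2 + 5*b^2)" by (simp add: power2_eq_square algebra_simps)
      then show "p \<in> S0 n" using p by (simp add: S0_def)
    qed
    moreover have "inj (\<lambda>(x::int,y::int). (5*x, 5*y))" by (auto simp: inj_def)
    ultimately show ?thesis by (simp add: card_image inj_on_subset)
  qed
  have "card ?A = card (S0 n \<union> S1 n)" using bij by (rule bij_betw_same_card)
  also have "\<dots> = card (S0 n) + card (S1 n)" using f0 f1 disj by (rule card_Un_disjoint)
  finally show ?thesis using c0 by simp
qed


definition r1 :: "nat \<Rightarrow> nat" where "r1 n = card {x::int. x^2 = int n}"

definition Th :: "'a::comm_ring_1 fps" where "Th = Abs_fps (\<lambda>n. of_nat (r1 n))"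

lemma finite_sq: "finite {x::int. P x \<and> x^2 = k}"
proof (rule finite_subset)
  show "{x::int. P x \<and> x^2 = k} \<subseteq> {-\<bar>k\<bar>..\<bar>k\<bar>}"
  proof
    fix x assume "x \<in> {x::int. P x \<and> x^2 = k}"
    then have "x^2 = k" by simp
    moreover have "\<bar>x\<bar> \<le> x^2" by (rule abs_le_sq)
    ultimately show "x \<in> {-\<bar>k\<bar>..\<bar>k\<bar>}" by auto
  qed
qed simp

lemma finite_sq_le: "finite {x::int. x^2 \<le> k}"
proof (rule finite_subset)
  show "{x::int. x^2 \<le> k} \<subseteq> {-\<bar>k\<bar>..\<bar>k\<bar>}"
  proof
    fix x assume "x \<in> {x::int. x^2 \<le> k}"
    then have "x^2 \<le> k" by simp
    moreover have "\<bar>x\<bar> \<le> x^2" by (rule abs_le_sq)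
    ultimately show "x \<in> {-\<bar>k\<bar>..\<bar>k\<bar>}" by auto
  qed
qed simp

lemma conv_card:
  fixes P Q :: "int \<Rightarrow> bool" and f g :: "int \<Rightarrow> int"
  assumes fP: "\<And>k. finite {x. P x \<and> f x = k}" and fQ: "\<And>k. finite {y. Q y \<and> g y = k}"
    and nP: "\<And>x. P x \<Longrightarrow> f x \<ge> 0" and nQ: "\<And>y. Q y \<Longrightarrow> g y \<ge> 0"
  shows "(\<Sum>i=0..n. card {x. P x \<and> f x = int i} * card {y. Q y \<and> g y = int (n - i)})
         = card {(x,y). P x \<and> Q y \<and> f x + g y = int n}"
proof -
  have eq: "{(x,y). P x \<and> Q y \<and> f x + g y = int n}
      = (\<Union>i\<in>{0..n}. {x. P x \<and> f x = int i} \<times> {y. Q y \<and> g y = int (n - i)})"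
  proof (rule set_eqI, rule iffI)
    fix p assume "p \<in> {(x,y). P x \<and> Q y \<and> f x + g y = int n}"
    then obtain x y where p: "p = (x,y)" "P x" "Q y" "f x + g y = int n" by auto
    have "f x \<ge> 0" "g y \<ge> 0" using p nP nQ by auto
    then have "nat (f x) \<in> {0..n}" "f x = int (nat (f x))" "g y = int (n - nat (f x))"
      using p by auto
    then show "p \<in> (\<Union>i\<in>{0..n}. {x. P x \<and> f x = int i} \<times> {y. Q y \<and> g y = int (n - i)})"
      using p by blast
  next
    fix p assume "p \<in> (\<Union>i\<in>{0..n}. {x. P x \<and> f x = int i} \<times> {y. Q y \<and> g y = int (n - i)})"
    then obtain i x y where "i \<le> n" "p = (x,y)" "P x" "Q y" "f x = int i" "g y = int (n - i)" by auto
    then show "p \<in> {(x,y). P x \<and> Q y \<and> f x + g y = int n}" by auto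
  qed
  have "card (\<Union>i\<in>{0..n}. {x. P x \<and> f x = int i} \<times> {y. Q y \<and> g y = int (n - i)})
      = (\<Sum>i=0..n. card ({x. P x \<and> f x = int i} \<times> {y. Q y \<and> g y = int (n - i)}))"
    by (rule card_UN_disjoint) (auto simp: fP fQ)
  also have "\<dots> = (\<Sum>i=0..n. card {x. P x \<and> f x = int i} * card {y. Q y \<and> g y = int (n - i)})"
    by (simp add: card_cartesian_product)
  finally show ?thesis using eq by simp
qed

lemma fps_cnt_mult:
  fixes P Q :: "int \<Rightarrow> bool" and f g :: "int \<Rightarrow> int"
  assumes fP: "\<And>k. finite {x. P x \<and> f x = k}" and fQ: "\<And>k. finite {y. Q y \<and> g y = k}"
    and nP: "\<And>x. P x \<Longrightarrow> f x \<ge> 0" and nQ: "\<And>y. Q y \<Longrightarrow> g y \<ge> 0"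
  shows "(Abs_fps (\<lambda>i. of_nat (card {x. P x \<and> f x = int i})) *
          Abs_fps (\<lambda>i. of_nat (card {y. Q y \<and> g y = int i})) :: 'a::comm_ring_1 fps) $ n
       = of_nat (card {(x,y). P x \<and> Q y \<and> f x + g y = int n})"
proof -
  have "(Abs_fps (\<lambda>i. of_nat (card {x. P x \<and> f x = int i})) *
          Abs_fps (\<lambda>i. of_nat (card {y. Q y \<and> g y = int i})) :: 'a fps) $ n
      = of_nat (\<Sum>i=0..n. card {x. P x \<and> f x = int i} * card {y. Q y \<and> g y = int (n - i)})"
    by (simp add: fps_mult_nth of_nat_mult)
  also have "\<dots> = of_nat (card {(x,y). P x \<and> Q y \<and> f x + g y = int n})"
    using conv_card[OF assms] by simp
  finally show ?thesis .
qed

lemma card_5sq: "card {x::int. 5 * x^2 = int i} = (if 5 dvd i then r1 (i div 5) else 0)"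
proof (cases "5 dvd i")
  case True
  then obtain m where i: "i = 5 * m" by (auto elim: dvdE)
  have "{x::int. 5 * x^2 = int i} = {x. x^2 = int m}" using i by auto
  then show ?thesis using i by (simp add: r1_def)
next
  case False
  have "{x::int. 5 * x^2 = int i} = {}"
  proof (rule ccontr)
    assume "{x::int. 5 * x^2 = int i} \<noteq> {}"
    then obtain x :: int where "5 * x^2 = int i" by auto
    then have "int 5 dvd int i" by (metis dvd_triv_left of_nat_numeral)
    then show False using False by (simp only: of_nat_dvd_iff)
  qed
  then show ?thesis using False by simp
qed

lemma Th_cnt: "(Th :: 'a::comm_ring_1 fps) = Abs_fps (\<lambda>i. of_nat (card {x::int. True \<and> x^2 = int i}))"
  by (simp add: Th_def r1_def)

lemma sub5_Th_cnt: "sub5 (Th :: 'a::comm_ring_1 fps) = Abs_fps (\<lambda>i. of_nat (card {x::int. True \<and> 5 * x^2 = int i}))"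
  by (rule fps_ext) (simp add: sub5_nth Th_def card_5sq)

lemma sect_Th_cnt:
  assumes "r < 5"
  shows "sect r (Th :: 'a::comm_ring_1 fps) =
     Abs_fps (\<lambda>i. of_nat (card {x::int. x^2 mod 5 = int r \<and> (x^2 - int r) div 5 = int i}))"
proof (rule fps_ext)
  fix i
  have "\<And>z::int. (z = int (5 * i + r)) = (z mod 5 = int r \<and> (z - int r) div 5 = int i)"
    using assms by presburger
  then have "{x::int. x^2 = int (5 * i + r)} = {x::int. x^2 mod 5 = int r \<and> (x^2 - int r) div 5 = int i}"
    by blast
  then show "sect r (Th :: 'a fps) $ i = Abs_fps (\<lambda>i. of_nat (card {x::int. x^2 mod 5 = int r \<and> (x^2 - int r) div 5 = int i})) $ i"
    by (simp add: sect_nth Th_def r1_def)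
qed

lemma Th_h23:
  assumes "r = 2 \<or> r = 3"
  shows "sect r (Th :: 'a::comm_ring_1 fps) = 0"
proof (rule fps_ext)
  fix i
  have "{x::int. x^2 = int (5 * i + r)} = {}"
  proof (rule ccontr)
    assume "{x::int. x^2 = int (5 * i + r)} \<noteq> {}"
    then obtain x :: int where x: "x^2 = int (5 * i + r)" by auto
    then have "x^2 mod 5 = int r" using assms by auto
    then show False using sq_mod5_cases[of x] assms by (auto split: if_splits)
  qed
  then show "sect r (Th :: 'a fps) $ i = 0 $ i" by (simp add: sect_nth Th_def r1_def)
qed

lemma Th_h0: "sect 0 (Th :: 'a::comm_ring_1 fps) = sub5 Th"
proof (rule fps_ext)
  fix k
  have "{x::int. x^2 = int (5 * k)} = (\<lambda>y. 5 * y) ` {y::int. 5 * y^2 = int k}"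
  proof (rule set_eqI, rule iffI)
    fix x :: int assume "x \<in> {x::int. x^2 = int (5 * k)}"
    then have x: "x^2 = 5 * int k" by simp
    then have "x^2 mod 5 = 0" by simp
    then have "x mod 5 = 0" using sq_mod5_cases[of x] by (auto split: if_splits)
    then obtain y where y: "x = 5 * y" by (auto elim!: dvdE simp: mod_eq_0_iff_dvd)
    then have "5 * (5 * y^2) = 5 * int k" using x by (simp add: power2_eq_square algebra_simps)
    then show "x \<in> (\<lambda>y. 5 * y) ` {y::int. 5 * y^2 = int k}" using y by auto
  next
    fix x :: int assume "x \<in> (\<lambda>y. 5 * y) ` {y::int. 5 * y^2 = int k}"
    then obtain y where "x = 5 * y" "5 * y^2 = int k" by auto
    then show "x \<in> {x::int. x^2 = int (5 * k)}" by (simp add: power2_eq_square algebra_simps)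
  qed
  then have "r1 (5 * k) = card {y::int. 5 * y^2 = int k}"
    by (simp add: r1_def card_image inj_on_def)
  moreover have "sub5 (Th::'a fps) $ k = of_nat (card {y::int. True \<and> 5*y^2 = int k})"
    by (simp only: sub5_Th_cnt fps.Abs_fps_inverse) simp
  ultimately show "sect 0 (Th :: 'a fps) $ k = sub5 Th $ k"
    by (simp add: sect_nth Th_def)
qed

lemma Th_hL: "(Th :: 'a::comm_ring_1 fps)^2 = (sub5 Th)^2 + fps_X * sect 1 Th * sect 4 Th"
proof (rule fps_ext)
  fix n
  have fin1: "\<And>k. finite {x::int. True \<and> x^2 = k}" by (rule finite_sq)
  have fin5: "\<And>k. finite {x::int. True \<and> 5 * x^2 = k}"
  proof -
    fix k :: int
    have "{x::int. True \<and> 5 * x^2 = k} \<subseteq> {x. x^2 \<le> k}"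
    proof
      fix x assume "x \<in> {x::int. True \<and> 5 * x^2 = k}"
      moreover have "x^2 \<ge> 0" by simp
      ultimately show "x \<in> {x. x^2 \<le> k}" by auto
    qed
    then show "finite {x::int. True \<and> 5 * x^2 = k}" by (rule finite_subset) (rule finite_sq_le)
  qed
  have finr: "\<And>r k. finite {x::int. x^2 mod 5 = int r \<and> (x^2 - int r) div 5 = k}"
  proof -
    fix r k
    show "finite {x::int. x^2 mod 5 = int r \<and> (x^2 - int r) div 5 = k}"
      by (rule finite_subset[OF _ finite_sq_le[of "5 * k + int r + 5"]]) auto
  qed
  have pos1: "\<And>x::int. x^2 mod 5 = int 1 \<Longrightarrow> (x^2 - int 1) div 5 \<ge> 0"
  proof -
    fix x :: int assume h: "x^2 mod 5 = int 1"
    have "x^2 \<ge> 0" by simp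
    moreover have h': "x^2 mod 5 = 1" using h by simp
    moreover have "\<forall>z::int. 0 \<le> z \<longrightarrow> z mod 5 = 1 \<longrightarrow> 1 \<le> z" by presburger
    ultimately have "x^2 \<ge> 1" by blast
    then show "(x^2 - int 1) div 5 \<ge> 0" by simp
  qed
  have pos4: "\<And>x::int. x^2 mod 5 = int 4 \<Longrightarrow> (x^2 - int 4) div 5 \<ge> 0"
  proof -
    fix x :: int assume h: "x^2 mod 5 = int 4"
    have "x^2 \<ge> 0" by simp
    moreover have h': "x^2 mod 5 = 4" using h by simp
    moreover have "\<forall>z::int. 0 \<le> z \<longrightarrow> z mod 5 = 4 \<longrightarrow> 4 \<le> z" by presburger
    ultimately have "x^2 \<ge> 4" by blast
    then show "(x^2 - int 4) div 5 \<ge> 0" by simp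
  qed
  have A: "((Th :: 'a fps)^2) $ n = of_nat (card {(x::int, y::int). x^2 + y^2 = int n})"
    unfolding power2_eq_square[of "Th::'a fps"] unfolding Th_cnt by (subst fps_cnt_mult[OF fin1 fin1]) auto
  have B: "((sub5 Th :: 'a fps)^2) $ n = of_nat (card {(x::int, y::int). 5*x^2 + 5*y^2 = int n})"
    unfolding power2_eq_square[of "sub5 Th::'a fps"] unfolding sub5_Th_cnt by (subst fps_cnt_mult[OF fin5 fin5]) auto
  have s1: "sect 1 (Th :: 'a fps) = Abs_fps (\<lambda>i. of_nat (card {x::int. x^2 mod 5 = int 1 \<and> (x^2 - int 1) div 5 = int i}))"
    by (rule sect_Th_cnt) simp
  have s4: "sect 4 (Th :: 'a fps) = Abs_fps (\<lambda>i. of_nat (card {x::int. x^2 mod 5 = int 4 \<and> (x^2 - int 4) div 5 = int i}))"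
    by (rule sect_Th_cnt) simp
  have C0: "\<And>m. (sect 1 (Th :: 'a fps) * sect 4 Th) $ m = of_nat (card {(x::int, y::int). x^2 mod 5 = int 1 \<and> y^2 mod 5 = int 4 \<and> (x^2 - int 1) div 5 + (y^2 - int 4) div 5 = int m})"
    unfolding s1 s4 by (rule fps_cnt_mult[OF finr finr pos1 pos4])
  have C: "(fps_X * sect 1 (Th :: 'a fps) * sect 4 Th) $ n = of_nat (card (S1 n))"
  proof (cases n)
    case 0
    have "S1 n = {}"
    proof (rule ccontr)
      assume "S1 n \<noteq> {}"
      then obtain x y :: int where "x^2 mod 5 = 1" "y^2 mod 5 = 4" "x^2 + y^2 = 0"
        using 0 by (auto simp: S1_def)
      moreover have "x^2 \<ge> 0" "y^2 \<ge> 0" by simp_all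
      ultimately show False by (cases "x^2 = 0") auto
    qed
    then show ?thesis using 0 by (simp add: mult.assoc)
  next
    case (Suc m)
    have "{(x::int, y::int). x^2 mod 5 = int 1 \<and> y^2 mod 5 = int 4 \<and> (x^2 - int 1) div 5 + (y^2 - int 4) div 5 = int m} = S1 n"
    proof -
      have key: "\<And>a b::int. a mod 5 = 1 \<Longrightarrow> b mod 5 = 4 \<Longrightarrow>
             ((a - 1) div 5 + (b - 4) div 5 = int m) = (a + b = 5 * int n)"
      proof -
        fix a b :: int assume ha: "a mod 5 = 1" and hb: "b mod 5 = 4"
        have ea: "a - 1 = 5 * ((a - 1) div 5)" using ha by presburger
        have eb: "b - 4 = 5 * ((b - 4) div 5)" using hb by presburger
        show "((a - 1) div 5 + (b - 4) div 5 = int m) = (a + b = 5 * int n)"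
          using ea eb Suc by auto
      qed
      have "\<And>a b::int. (a mod 5 = 1 \<and> b mod 5 = 4 \<and> (a - 1) div 5 + (b - 4) div 5 = int m)
             = (a mod 5 = 1 \<and> b mod 5 = 4 \<and> a + b = 5 * int n)" using key by blast
      then show ?thesis unfolding S1_def by auto
    qed
    then show ?thesis using Suc C0[of m] by (simp add: mult.assoc)
  qed
  show "((Th :: 'a fps)^2) $ n = ((sub5 Th)^2 + fps_X * sect 1 Th * sect 4 Th) $ n"
    using A B C lattice_count[of n] by simp
qed


lemma sum_lt5: "(\<Sum>i<5::nat. f i) = f 0 + f 1 + f 2 + f 3 + f (4::nat)"
  by (simp add: eval_nat_numeral add_ac)

lemma sect_mult_sub5:
  assumes "r < 5"
  shows "sect r (A * sub5 C) = sect r A * C"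
proof -
  have r: "r = 0 \<or> r = 1 \<or> r = 2 \<or> r = 3 \<or> r = 4" using assms by auto
  show ?thesis
    using r by (auto simp: sect_mult sum_lt5 sect_sub5)
qed

lemma sect_2: "sect r (2 * A) = 2 * sect r A"
  by (simp only: mult_2 sect_add)

lemma core_alg:
  fixes T G :: "'a::comm_ring_1 fps"
  assumes c5: "(5::'a fps) = 0"
    and h0: "sect 0 T = sub5 T" and h2: "sect 2 T = 0" and h3: "sect 3 T = 0"
    and hL: "T^2 = (sub5 T)^2 + fps_X * sect 1 T * sect 4 T"
    and hF: "T^5 = sub5 T"
    and hG: "G * T = 1"
  shows "sect 0 G = T^3"
    and "sect 1 (sect 0 (sect 0 (T^3))) = 0"
    and "sect 4 (sect 0 (sect 0 (T^3))) = 0"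
    and "sect 0 (sect 0 (sect 0 (T^3))) = sect 0 (T^3)"
proof -
  define a where "a = sub5 T"
  define b where "b = sect 1 T"
  define c where "c = sect 4 T"
  have L: "T^2 = a^2 + fps_X * b * c" using hL by (simp add: a_def b_def c_def)
  have t0: "sect 0 T = a" using h0 a_def by simp
  have b1: "sect (Suc 0) T = b" using b_def by simp
  note ts = t0 h2 h3 b_def[symmetric] c_def[symmetric] b1
  have S0: "sect 0 (T^2) = a^2 + 2 * fps_X * b * c"
    by (simp add: power2_eq_square sect_mult sum_lt5 ts algebra_simps)
  have S1: "sect 1 (T^2) = 2 * a * b"
    by (simp add: power2_eq_square sect_mult sum_lt5 ts algebra_simps)
  have S2: "sect 2 (T^2) = b^2"
    by (simp add: power2_eq_square sect_mult sum_lt5 ts algebra_simps)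
  have S3: "sect 3 (T^2) = fps_X * c^2"
    by (simp add: power2_eq_square sect_mult sum_lt5 ts algebra_simps)
  have S4: "sect 4 (T^2) = 2 * a * c"
    by (simp add: power2_eq_square sect_mult sum_lt5 ts algebra_simps)
  have T3: "T^3 = T^2 * T" by (simp add: power2_eq_square power3_eq_cube)
  have U0: "sect 0 (T^3) = a * T^2"
  proof -
    have "sect 0 (T^3) = a^3 + 6 * fps_X * a * b * c"
      unfolding T3 by (simp add: sect_mult sum_lt5 ts S0 S1 S2 S3 S4 algebra_simps power2_eq_square power3_eq_cube)
    also have "\<dots> = a * (a^2 + fps_X * b * c) + 5 * (fps_X * a * b * c)"
      by (simp add: algebra_simps power2_eq_square power3_eq_cube)
    also have "\<dots> = a * (a^2 + fps_X * b * c)" by (simp only: c5 mult_zero_left add_0_right)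
    finally show ?thesis using L by simp
  qed
  have U1: "sect 1 (T^3) = 3 * b * T^2"
  proof -
    have "sect 1 (T^3) = 3 * a^2 * b + 3 * fps_X * b^2 * c"
      unfolding T3 by (simp add: sect_mult sum_lt5 ts S0 S1 S2 S3 S4 algebra_simps power2_eq_square)
    also have "\<dots> = 3 * b * (a^2 + fps_X * b * c)"
      by (simp add: algebra_simps power2_eq_square)
    finally show ?thesis using L by simp
  qed
  have U4: "sect 4 (T^3) = 3 * c * T^2"
  proof -
    have "sect 4 (T^3) = 3 * a^2 * c + 3 * fps_X * b * c^2"
      unfolding T3 by (simp add: sect_mult sum_lt5 ts S0 S1 S2 S3 S4 algebra_simps power2_eq_square)
    also have "\<dots> = 3 * c * (a^2 + fps_X * b * c)"
      by (simp add: algebra_simps power2_eq_square)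
    finally show ?thesis using L by simp
  qed
  have U1s: "sect (Suc 0) (T^3) = 3 * b * T^2" using U1 by simp
  have T4: "T^4 = T^3 * T" by (simp add: power_Suc2[symmetric] eval_nat_numeral)
  have V0: "sect 0 (T^4) = T^4"
  proof -
    have "sect 0 (T^4) = a * T^2 * a + fps_X * (3 * b * T^2) * c + fps_X * (3 * c * T^2) * b"
      unfolding T4 by (simp add: sect_mult sum_lt5 ts U0 U1 U1s U4 algebra_simps)
    also have "\<dots> = T^2 * (a^2 + fps_X * b * c) + 5 * (fps_X * b * c * T^2)"
      by (simp add: algebra_simps power2_eq_square)
    also have "\<dots> = T^2 * (a^2 + fps_X * b * c)" by (simp only: c5 mult_zero_left add_0_right)
    also have "\<dots> = T^2 * T^2" by (simp only: L)
    also have "\<dots> = T^4" by (simp flip: power_add)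
    finally show ?thesis .
  qed
  have G1: "sect 0 G * T = T^4"
  proof -
    have "T^4 = T^4 * (G * T)" using hG by simp
    also have "\<dots> = G * T^5" by (simp add: algebra_simps eval_nat_numeral)
    also have "\<dots> = G * sub5 T" using hF by simp
    finally have "T^4 = G * sub5 T" .
    then have "sect 0 (T^4) = sect 0 G * T" by (simp add: sect_mult_sub5)
    with V0 show ?thesis by simp
  qed
  show "sect 0 G = T^3"
  proof -
    have "sect 0 G = sect 0 G * (G * T)" using hG by simp
    also have "\<dots> = sect 0 G * T * G" by (simp add: mult_ac)
    also have "\<dots> = T^4 * G" using G1 by simp
    also have "\<dots> = T^3 * (G * T)" by (simp add: algebra_simps eval_nat_numeral)
    finally show ?thesis using hG by simp
  qed
  have W: "sect 0 (sect 0 (T^3)) = 2 * T^3 - T * sub5 (T^2)"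
  proof -
    have "sect 0 (sect 0 (T^3)) = sect 0 (T^2 * sub5 T)" using U0 a_def by (simp add: mult.commute)
    also have "\<dots> = (a^2 + 2 * fps_X * b * c) * T" by (simp add: sect_mult_sub5 S0)
    also have "\<dots> = 2 * (T^2 * T) - T * a^2" using L by (simp add: algebra_simps)
    also have "\<dots> = 2 * T^3 - T * sub5 (T^2)" using a_def by (simp add: sub5_power T3)
    finally show ?thesis .
  qed
  have "sect 1 (sect 0 (sect 0 (T^3))) = 2 * sect 1 (T^3) - sect 1 T * T^2"
    unfolding W sect_diff sect_2 by (simp only: sect_mult_sub5 zero_less_numeral one_less_numeral_iff semiring_norm)
  also have "\<dots> = 5 * (b * T^2)" unfolding U1 b_def[symmetric] by (simp add: algebra_simps)
  also have "\<dots> = 0" by (simp only: c5 mult_zero_left)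
  finally show "sect 1 (sect 0 (sect 0 (T^3))) = 0" .
  have "sect 4 (sect 0 (sect 0 (T^3))) = 2 * sect 4 (T^3) - sect 4 T * T^2"
    unfolding W sect_diff sect_2 by (simp only: sect_mult_sub5 numeral_less_iff semiring_norm)
  also have "\<dots> = 5 * (c * T^2)" unfolding U4 c_def[symmetric] by (simp add: algebra_simps)
  also have "\<dots> = 0" by (simp only: c5 mult_zero_left)
  finally show "sect 4 (sect 0 (sect 0 (T^3))) = 0" .
  have "sect 0 (sect 0 (sect 0 (T^3))) = 2 * sect 0 (T^3) - sect 0 T * T^2"
    unfolding W sect_diff sect_2 by (simp only: sect_mult_sub5 zero_less_numeral)
  also have "\<dots> = sect 0 (T^3)" unfolding U0 t0 by (simp add: algebra_simps)
  finally show "sect 0 (sect 0 (sect 0 (T^3))) = sect 0 (T^3)" .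
qed


definition OP :: "nat \<Rightarrow> nat \<Rightarrow> (nat multiset \<times> nat set) set" where
  "OP n m = {(M, S). (\<forall>x\<in>#M. 0 < x \<and> x \<le> m) \<and> sum_mset M = n \<and> S \<subseteq> set_mset M}"

definition opm :: "nat \<Rightarrow> nat \<Rightarrow> nat" where "opm n m = card (OP n m)"

lemma size_le_sum: "(\<forall>x\<in>#M. 0 < (x::nat)) \<Longrightarrow> size M \<le> sum_mset M"
  by (induction M) auto

lemma mult_count_le_sum: "a * count M a \<le> sum_mset (M :: nat multiset)"
proof -
  define c where "c = count M a"
  have sub: "replicate_mset c a \<subseteq># M" unfolding c_def
    by (rule count_le_replicate_mset_subset_eq[THEN iffD1]) (rule order_refl)
  then have "\<exists>C. M = replicate_mset c a + C" by (rule subset_mset.le_iff_add[THEN iffD1])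
  then obtain C where hC: "M = replicate_mset c a + C" by blast
  have "sum_mset M = sum_mset (replicate_mset c a + C)" using hC by (rule arg_cong)
  also have "\<dots> = c * a + sum_mset C" by simp
  finally show ?thesis unfolding c_def[symmetric] by simp
qed

lemma finite_overpartitions: "finite (overpartitions n)"
proof (rule finite_subset)
  show "overpartitions n \<subseteq> (\<Union>s\<in>{0..n}. multisets_of_size {1..n} s) \<times> Pow {1..n}"
  proof
    fix p assume "p \<in> overpartitions n"
    then obtain M S where p: "p = (M,S)" "\<forall>x\<in>#M. 0 < x" "sum_mset M = n" "S \<subseteq> set_mset M"
      by (auto simp: overpartitions_def)
    have le: "\<forall>x\<in>#M. x \<le> n" using p(3) by (metis sum_mset.remove le_add1)
    have "size M \<le> n" using size_le_sum[OF p(2)] p(3) by simp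
    moreover have "set_mset M \<subseteq> {1..n}" using p(2) le by auto
    ultimately show "p \<in> (\<Union>s\<in>{0..n}. multisets_of_size {1..n} s) \<times> Pow {1..n}"
      using p by (auto simp: multisets_of_size_def)
  qed
qed (auto intro: finite_multisets_of_size)

lemma OP_sub: "OP n m \<subseteq> overpartitions n"
  by (auto simp: OP_def overpartitions_def)

lemma finite_OP: "finite (OP n m)"
  using finite_subset[OF OP_sub finite_overpartitions] .

lemma pbar_opm: "pbar n = opm n n"
proof -
  have "overpartitions n = OP n n"
  proof (rule set_eqI)
    fix p
    show "p \<in> overpartitions n \<longleftrightarrow> p \<in> OP n n"
    proof
      assume "p \<in> overpartitions n"
      then obtain M S where p: "p = (M,S)" "\<forall>x\<in>#M. 0 < x" "sum_mset M = n" "S \<subseteq> set_mset M"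
        by (auto simp: overpartitions_def)
      have le: "\<forall>x\<in>#M. x \<le> n" using p(3) by (metis sum_mset.remove le_add1)
      then show "p \<in> OP n n" using p by (auto simp: OP_def)
    qed (use OP_sub in auto)
  qed
  then show ?thesis by (simp add: pbar_def opm_def)
qed

lemma opm_0: "opm n 0 = (if n = 0 then 1 else 0)"
proof -
  have "OP n 0 = (if n = 0 then {({#}, {})} else {})"
  proof (rule set_eqI)
    fix p
    show "p \<in> OP n 0 \<longleftrightarrow> p \<in> (if n = 0 then {({#}, {})} else {})"
    proof
      assume "p \<in> OP n 0"
      then obtain M S where p: "p = (M,S)" "\<forall>x\<in>#M. 0 < x \<and> x \<le> 0" "sum_mset M = n" "S \<subseteq> set_mset M"
        by (auto simp: OP_def)
      then have "M = {#}" by (metis le_zero_eq multiset_nonemptyE not_less0)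
      then show "p \<in> (if n = 0 then {({#}, {})} else {})" using p by auto
    next
      assume "p \<in> (if n = 0 then {({#}, {})} else {})"
      then show "p \<in> OP n 0" by (auto simp: OP_def split: if_splits)
    qed
  qed
  then show ?thesis by (simp add: opm_def)
qed

definition Bset :: "nat \<Rightarrow> nat \<Rightarrow> nat \<Rightarrow> (nat multiset \<times> nat set) set" where
  "Bset n m i = {p \<in> OP n (Suc m). Suc m * count (fst p) (Suc m) = i}"

lemma Bset_0: "Bset n m 0 = OP n m"
proof (rule set_eqI)
  fix p
  show "p \<in> Bset n m 0 \<longleftrightarrow> p \<in> OP n m"
  proof
    assume "p \<in> Bset n m 0"
    then obtain M S where p: "p = (M,S)" "\<forall>x\<in>#M. 0 < x \<and> x \<le> Suc m" "sum_mset M = n"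
        "S \<subseteq> set_mset M" "count M (Suc m) = 0"
      by (auto simp: Bset_def OP_def)
    have "\<forall>x\<in>#M. 0 < x \<and> x \<le> m"
    proof
      fix x assume "x \<in># M"
      moreover then have "x \<noteq> Suc m" using p(5) by (metis count_eq_zero_iff)
      ultimately show "0 < x \<and> x \<le> m" using p(2) by fastforce
    qed
    then show "p \<in> OP n m" using p by (auto simp: OP_def)
  next
    assume "p \<in> OP n m"
    then obtain M S where p: "p = (M,S)" "\<forall>x\<in>#M. 0 < x \<and> x \<le> m" "sum_mset M = n"
        "S \<subseteq> set_mset M"
      by (auto simp: OP_def)
    have "count M (Suc m) = 0" using p(2) by (meson count_eq_zero_iff not_less_eq_eq order_refl)
    then show "p \<in> Bset n m 0" using p by (auto simp: Bset_def OP_def)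
  qed
qed

lemma Bset_ndvd:
  assumes "\<not> Suc m dvd i" shows "Bset n m i = {}"
proof (rule ccontr)
  assume "Bset n m i \<noteq> {}"
  then obtain p where "p \<in> Bset n m i" by blast
  then have "Suc m * count (fst p) (Suc m) = i" by (simp add: Bset_def)
  then have "Suc m dvd i" by (metis dvd_triv_left)
  with assms show False by simp
qed

lemma Bset_mem:
  assumes "p \<in> Bset n m (Suc m * j)"
  obtains M S where "p = (M,S)" "\<forall>x\<in>#M. 0 < x \<and> x \<le> Suc m" "sum_mset M = n"
    "S \<subseteq> set_mset M" "count M (Suc m) = j"
proof -
  obtain M S where p: "p = (M,S)" by (cases p)
  then have h: "(\<forall>x\<in>#M. 0 < x \<and> x \<le> Suc m) \<and> sum_mset M = n \<and> S \<subseteq> set_mset M"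
      "Suc m * count M (Suc m) = Suc m * j"
    using assms by (auto simp: Bset_def OP_def)
  have "count M (Suc m) = j" using h(2) by (simp only: mult_cancel1) simp
  then show ?thesis using that p h by blast
qed

lemma Bset_card:
  assumes j: "j \<ge> 1" and i: "i = Suc m * j" and le: "i \<le> n"
  shows "card (Bset n m i) = 2 * opm (n - i) m"
proof -
  let ?a = "Suc m"
  let ?R = "replicate_mset j ?a"
  define f where "f p = ((fst p - ?R, snd p - {?a}), ?a \<in> snd p)" for p :: "nat multiset \<times> nat set"
  define g where "g q = (fst (fst q) + ?R, if snd q then insert ?a (snd (fst q)) else snd (fst q))"
    for q :: "(nat multiset \<times> nat set) \<times> bool"
  have bij: "bij_betw f (Bset n m i) (OP (n - i) m \<times> (UNIV :: bool set))"
  proof (rule bij_betw_byWitness[where f' = g])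
    show "\<forall>p\<in>Bset n m i. g (f p) = p"
    proof
      fix p assume "p \<in> Bset n m i"
      then obtain M S where p: "p = (M,S)" "S \<subseteq> set_mset M" "count M ?a = j"
        unfolding i by (rule Bset_mem) blast
      have "?R \<subseteq># M"
        by (rule count_le_replicate_mset_subset_eq[THEN iffD1]) (simp add: p(3))
      then have MM: "M - ?R + ?R = M" by (rule subset_mset.diff_add)
      show "g (f p) = p" using p MM by (auto simp: f_def g_def)
    qed
    show "\<forall>q\<in>OP (n - i) m \<times> (UNIV :: bool set). f (g q) = q"
    proof
      fix q assume "q \<in> OP (n - i) m \<times> (UNIV :: bool set)"
      then obtain M S b where q: "q = ((M,S),b)" "\<forall>x\<in>#M. 0 < x \<and> x \<le> m" "S \<subseteq> set_mset M"
        by (auto simp: OP_def)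
      have "?a \<notin> S"
      proof
        assume "?a \<in> S"
        then have "?a \<in># M" using q(3) by auto
        then show False using q(2) by fastforce
      qed
      then show "f (g q) = q" using q by (auto simp: f_def g_def)
    qed
    show "f ` Bset n m i \<subseteq> OP (n - i) m \<times> (UNIV :: bool set)"
    proof (rule image_subsetI)
      fix p assume "p \<in> Bset n m i"
      then obtain M S where p: "p = (M,S)" "\<forall>x\<in>#M. 0 < x \<and> x \<le> ?a" "sum_mset M = n"
          "S \<subseteq> set_mset M" "count M ?a = j"
        unfolding i by (rule Bset_mem) blast
      have sub: "?R \<subseteq># M"
        by (rule count_le_replicate_mset_subset_eq[THEN iffD1]) (simp add: p(5))
      then have MM: "(M - ?R) + ?R = M" by (rule subset_mset.diff_add)
      have "sum_mset (M - ?R) + j * ?a = sum_mset ((M - ?R) + ?R)" by simp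
      also have "\<dots> = n" unfolding MM by (rule p(3))
      finally have s0: "sum_mset (M - ?R) + j * ?a = n" .
      have ji: "j * ?a = i" using i by (simp only: mult.commute)
      from s0 ji have s: "sum_mset (M - ?R) = n - i" by linarith
      have c: "count (M - ?R) ?a = 0" using p(5) by simp
      have parts: "\<forall>x\<in>#(M - ?R). 0 < x \<and> x \<le> m"
      proof
        fix x assume x: "x \<in># M - ?R"
        then have "x \<in># M" by (meson in_diffD)
        moreover have "x \<noteq> ?a" using x c by (metis count_eq_zero_iff)
        ultimately show "0 < x \<and> x \<le> m" using p(2) by fastforce
      qed
      have ss: "S - {?a} \<subseteq> set_mset (M - ?R)"
      proof
        fix x assume "x \<in> S - {?a}"
        then have "x \<in># M" "x \<noteq> ?a" using p(4) by auto
        then show "x \<in># M - ?R" by (simp add: in_diff_count)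
      qed
      have "(M - ?R, S - {?a}) \<in> OP (n - i) m" unfolding OP_def using s parts ss by blast
      moreover have "f p = ((M - ?R, S - {?a}), ?a \<in> S)" by (simp add: f_def p(1))
      ultimately show "f p \<in> OP (n - i) m \<times> (UNIV :: bool set)" by simp
    qed
    show "g ` (OP (n - i) m \<times> (UNIV :: bool set)) \<subseteq> Bset n m i"
    proof (rule image_subsetI)
      fix q assume "q \<in> OP (n - i) m \<times> (UNIV :: bool set)"
      then obtain M S b where q: "q = ((M,S),b)" "\<forall>x\<in>#M. 0 < x \<and> x \<le> m" "sum_mset M = n - i"
          "S \<subseteq> set_mset M"
        by (auto simp: OP_def)
      have c: "count M ?a = 0" using q(2) by (meson count_eq_zero_iff not_less_eq_eq order_refl)
      have s: "sum_mset (M + ?R) = n" using q(3) le i by simp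
      have parts: "\<forall>x\<in>#(M + ?R). 0 < x \<and> x \<le> ?a" using q(2) by auto
      have inR: "?a \<in># M + ?R" using j by simp
      have ss: "(if b then insert ?a S else S) \<subseteq> set_mset (M + ?R)" using q(4) inR by auto
      have "count (M + ?R) ?a = j" using c by simp
      then have cnt: "Suc m * count (M + ?R) ?a = i" using i by simp
      have gq: "g q = (M + ?R, if b then insert ?a S else S)" by (simp add: g_def q(1))
      have "(M + ?R, if b then insert ?a S else S) \<in> OP n (Suc m)"
        unfolding OP_def using s parts ss by blast
      then show "g q \<in> Bset n m i" unfolding gq Bset_def using cnt by simp
    qed
  qed
  have "card (Bset n m i) = card (OP (n - i) m \<times> (UNIV :: bool set))" using bij by (rule bij_betw_same_card)
  also have "\<dots> = 2 * opm (n - i) m" by (simp add: card_cartesian_product opm_def)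
  finally show ?thesis .
qed

lemma opm_Suc: "opm n (Suc m) = (\<Sum>i=0..n. (if i = 0 then 1 else if Suc m dvd i then 2 else 0) * opm (n - i) m)"
proof -
  have U: "OP n (Suc m) = (\<Union>i\<in>{0..n}. Bset n m i)"
  proof (rule set_eqI, rule iffI)
    fix p assume h: "p \<in> OP n (Suc m)"
    then obtain M S where p: "p = (M,S)" "sum_mset M = n" by (auto simp: OP_def)
    have "Suc m * count M (Suc m) \<le> n" using mult_count_le_sum[of "Suc m" M] p by simp
    then show "p \<in> (\<Union>i\<in>{0..n}. Bset n m i)" using h p by (auto simp: Bset_def)
  qed (auto simp: Bset_def)
  have fin: "\<And>i. finite (Bset n m i)"
    by (rule finite_subset[OF _ finite_OP[of n "Suc m"]]) (auto simp: Bset_def)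
  have "opm n (Suc m) = (\<Sum>i=0..n. card (Bset n m i))"
    unfolding opm_def U
  proof (rule card_UN_disjoint)
    show "\<forall>i\<in>{0..n}. finite (Bset n m i)" using fin by blast
    show "\<forall>i\<in>{0..n}. \<forall>j\<in>{0..n}. i \<noteq> j \<longrightarrow> Bset n m i \<inter> Bset n m j = {}"
      by (auto simp: Bset_def)
  qed simp
  also have "\<dots> = (\<Sum>i=0..n. (if i = 0 then 1 else if Suc m dvd i then 2 else 0) * opm (n - i) m)"
  proof (rule sum.cong[OF refl])
    fix i assume i: "i \<in> {0..n}"
    show "card (Bset n m i) = (if i = 0 then 1 else if Suc m dvd i then 2 else 0) * opm (n - i) m"
    proof (cases "i = 0")
      case True
      then show ?thesis by (simp add: Bset_0 opm_def)
    next
      case False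
      show ?thesis
      proof (cases "Suc m dvd i")
        case True
        then obtain j where j: "i = Suc m * j" by (auto elim: dvdE)
        then have "j \<ge> 1" using False by (cases j) auto
        then show ?thesis using Bset_card[OF _ j] i False True by simp
      next
        case False2: False
        then show ?thesis using False by (simp add: Bset_ndvd)
      qed
    qed
  qed
  finally show ?thesis .
qed


definition qp :: "nat \<Rightarrow> nat \<Rightarrow> int fps" where
  "qp a b = (\<Prod>j\<in>{Suc a..b}. (1 - fps_X^(2*j)))"

lemma qp_same: "qp a a = 1"
  by (simp add: qp_def)

lemma qp_Suc: "a \<le> b \<Longrightarrow> qp a (Suc b) = qp a b * (1 - fps_X^(2 * Suc b))"
  by (simp add: qp_def)

lemma qp_split: "a \<le> b \<Longrightarrow> b \<le> c \<Longrightarrow> qp a b * qp b c = qp a c"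
proof (induction c)
  case 0
  then show ?case by (simp add: qp_same)
next
  case (Suc c)
  show ?case
  proof (cases "b = Suc c")
    case True
    then show ?thesis by (simp add: qp_same)
  next
    case False
    then have "b \<le> c" using Suc by simp
    then show ?thesis using Suc by (simp add: qp_Suc mult.assoc)
  qed
qed

lemma qp_0th: "qp a b $ 0 = 1"
proof (induction b)
  case 0
  then show ?case by (simp add: qp_def)
next
  case (Suc b)
  show ?case
  proof (cases "a \<le> b")
    case True
    then show ?thesis using Suc by (simp add: qp_Suc)
  next
    case False
    then have "{Suc a..Suc b} = {}" by auto
    then show ?thesis by (simp add: qp_def)
  qed
qed

lemma qp_nz: "qp a b \<noteq> 0"
  using qp_0th[of a b] by auto

lemma one_minus_X_eqto:
  assumes "M \<le> e"
  shows "\<forall>i<M. (1 - fps_X^e :: int fps) $ i = (1::int fps) $ i"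
  using assms by auto

lemma qp_eqto1: "\<forall>i<2 * Suc a. qp a b $ i = (1::int fps) $ i"
proof (induction b)
  case 0
  then show ?case by (simp add: qp_def)
next
  case (Suc b)
  show ?case
  proof (cases "a \<le> b")
    case True
    have "\<forall>i<2 * Suc a. (qp a b * (1 - fps_X^(2 * Suc b))) $ i = ((1::int fps) * 1) $ i"
      by (rule eqto_mult[OF Suc]) (rule one_minus_X_eqto, use True in simp)
    then show ?thesis using True by (simp add: qp_Suc)
  next
    case False
    then have "{Suc a..Suc b} = {}" by auto
    then show ?thesis by (simp add: qp_def)
  qed
qed

fun qb :: "nat \<Rightarrow> nat \<Rightarrow> int fps" where
  "qb 0 k = (if k = 0 then 1 else 0)"
| "qb (Suc m) 0 = 1"
| "qb (Suc m) (Suc k) = qb m k + fps_X^(2 * Suc k) * qb m (Suc k)"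

lemma qb_0: "qb m 0 = 1"
  by (cases m) auto

lemma qb_zero: "m < k \<Longrightarrow> qb m k = 0"
proof (induction m arbitrary: k)
  case 0
  then show ?case by simp
next
  case (Suc m)
  then obtain k' where "k = Suc k'" by (cases k) auto
  then show ?case using Suc by simp
qed

lemma qb_prod: "k \<le> m \<Longrightarrow> qp 0 (m - k) * qb m k = qp k m"
proof (induction m arbitrary: k)
  case 0
  then show ?case by (simp add: qp_same)
next
  case (Suc m)
  show ?case
  proof (cases k)
    case 0
    then show ?thesis by (simp add: qb_0)
  next
    case (Suc k')
    then have k': "k' \<le> m" using Suc.prems by simp
    show ?thesis
    proof (cases "k' = m")
      case True
      have "qp 0 0 * qb m m = qp m m" using Suc.IH[of m] by simp
      then have "qb m m = 1" by (simp add: qp_same)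
      then show ?thesis using Suc True by (simp add: qp_same qb_zero)
    next
      case False
      then have lt: "k' < m" using k' by simp
      have e1: "qp 0 (m - k') = qp 0 (m - Suc k') * (1 - fps_X^(2 * (m - k')))"
        using lt qp_Suc[of 0 "m - Suc k'"] by (simp add: Suc_diff_Suc)
      have e2: "qp k' m = (1 - fps_X^(2 * Suc k')) * qp (Suc k') m"
      proof -
        have "qp k' (Suc k') * qp (Suc k') m = qp k' m" using lt by (intro qp_split) auto
        moreover have "qp k' (Suc k') = 1 - fps_X^(2 * Suc k')" by (simp add: qp_def)
        ultimately show ?thesis by simp
      qed
      have IH1: "qp 0 (m - k') * qb m k' = qp k' m" using Suc.IH k' by simp
      have IH2: "qp 0 (m - Suc k') * qb m (Suc k') = qp (Suc k') m" using Suc.IH lt by simp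
      have "qp 0 (Suc m - k) * qb (Suc m) k = qp 0 (m - k') * qb m k' + qp 0 (m - k') * fps_X^(2 * Suc k') * qb m (Suc k')"
        using Suc by (simp add: algebra_simps)
      also have "\<dots> = qp k' m + (1 - fps_X^(2 * (m - k'))) * fps_X^(2 * Suc k') * qp (Suc k') m"
      proof -
        have "qp 0 (m - k') * fps_X^(2 * Suc k') * qb m (Suc k')
            = (1 - fps_X^(2 * (m - k'))) * fps_X^(2 * Suc k') * (qp 0 (m - Suc k') * qb m (Suc k'))"
          unfolding e1 by (simp only: mult_ac)
        then show ?thesis unfolding IH1 IH2 by simp
      qed
      also have "\<dots> = qp (Suc k') m * ((1 - fps_X^(2 * Suc k')) + (1 - fps_X^(2 * (m - k'))) * fps_X^(2 * Suc k'))"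
        unfolding e2 by (simp add: algebra_simps)
      also have "(1 - fps_X^(2 * Suc k')) + (1 - fps_X^(2 * (m - k'))) * fps_X^(2 * Suc k') = (1 - fps_X^(2 * Suc m) :: int fps)"
      proof -
        have "2 * (m - k') + 2 * Suc k' = 2 * Suc m" using lt by simp
        then have "(fps_X::int fps)^(2 * (m - k')) * fps_X^(2 * Suc k') = fps_X^(2 * Suc m)"
          by (simp flip: power_add)
        then show ?thesis by (simp add: algebra_simps)
      qed
      also have "qp (Suc k') m * (1 - fps_X^(2 * Suc m)) = qp k (Suc m)"
        using Suc lt by (simp add: qp_Suc)
      finally show ?thesis .
    qed
  qed
qed

lemma qb_mm: "qb m m = 1"
  using qb_prod[of m m] by (simp add: qp_same)

lemma qb_sym: "k \<le> m \<Longrightarrow> qb m k = qb m (m - k)"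
proof -
  assume k: "k \<le> m"
  have a: "qp 0 k * (qp 0 (m - k) * qb m k) = qp 0 m"
    using qb_prod[OF k] qp_split[of 0 k m] k by simp
  have b: "qp 0 (m - k) * (qp 0 k * qb m (m - k)) = qp 0 m"
    using qb_prod[of "m - k" m] qp_split[of 0 "m - k" m] k by simp
  have "(qp 0 k * qp 0 (m - k)) * qb m k = (qp 0 k * qp 0 (m - k)) * qb m (m - k)"
    using a b by (simp add: algebra_simps)
  moreover have "qp 0 k * qp 0 (m - k) \<noteq> 0" using qp_nz by simp
  ultimately show ?thesis by simp
qed

lemma qb_form2: "k \<le> m \<Longrightarrow> qb (Suc m) (Suc k) = fps_X^(2 * (m - k)) * qb m k + qb m (Suc k)"
proof -
  assume k: "k \<le> m"
  show ?thesis
  proof (cases "k = m")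
    case True
    then show ?thesis by (simp add: qb_zero qb_mm)
  next
    case False
    then obtain t where t: "m - k = Suc t" using k by (cases "m - k") auto
    have "qb (Suc m) (Suc k) = qb (Suc m) (Suc m - Suc k)" using k by (intro qb_sym) simp
    also have "Suc m - Suc k = Suc t" using t by simp
    also have "qb (Suc m) (Suc t) = qb m t + fps_X^(2 * Suc t) * qb m (Suc t)" by simp
    also have "qb m t = qb m (Suc k)"
    proof -
      have "t \<le> m" using t by simp
      then have "qb m t = qb m (m - t)" by (rule qb_sym)
      moreover have "m - t = Suc k" using t k by simp
      ultimately show ?thesis by simp
    qed
    also have "qb m (Suc t) = qb m k"
    proof -
      have "qb m k = qb m (m - k)" using k by (rule qb_sym)
      then show ?thesis using t by simp
    qed
    finally show ?thesis using t by (simp add: algebra_simps)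
  qed
qed

definition qbi :: "nat \<Rightarrow> int \<Rightarrow> int fps" where
  "qbi m j = (if 0 \<le> j \<and> j \<le> int m then qb m (nat j) else 0)"

lemma qbi_nz: "qbi m j \<noteq> 0 \<Longrightarrow> 0 \<le> j \<and> j \<le> int m"
  by (auto simp: qbi_def split: if_splits)

lemma nat_1_int [simp]: "nat (1 + int k) = Suc k"
  by (simp add: nat_add_distrib)

lemma qbi_pos:
  assumes "j = int (Suc k)"
  shows "qbi m j = (if Suc k \<le> m then qb m (Suc k) else 0)"
    and "qbi m (j - 1) = (if k \<le> m then qb m k else 0)"
    and "nat j = Suc k"
  using assms by (auto simp: qbi_def)

lemma qbi_f1: "qbi (Suc m) j = qbi m (j - 1) + fps_X^(2 * nat j) * qbi m j"
proof (cases "j \<le> 0")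
  case True
  then show ?thesis
  proof (cases "j = 0")
    case True
    then show ?thesis by (simp add: qbi_def qb_0)
  next
    case False
    then show ?thesis using True by (simp add: qbi_def)
  qed
next
  case False
  then obtain k where k: "j = int (Suc k)" by (metis gr0_implies_Suc linorder_not_le of_nat_0_less_iff pos_int_cases)
  note e = qbi_pos[OF k]
  show ?thesis
  proof (cases "Suc k \<le> m")
    case True
    then show ?thesis unfolding e by simp
  next
    case False
    then have "qb m (Suc k) = 0" by (intro qb_zero) simp
    then show ?thesis unfolding e using False by (auto simp: qb_zero)
  qed
qed

lemma qbi_f2: "qbi (Suc m) j = fps_X^(2 * nat (int m + 1 - j)) * qbi m (j - 1) + qbi m j"
proof (cases "j \<le> 0")
  case True
  then show ?thesis
  proof (cases "j = 0")
    case True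
    then show ?thesis by (simp add: qbi_def qb_0)
  next
    case False
    then show ?thesis using True by (simp add: qbi_def)
  qed
next
  case False
  then obtain k where k: "j = int (Suc k)" by (metis gr0_implies_Suc linorder_not_le of_nat_0_less_iff pos_int_cases)
  note e = qbi_pos[OF k]
  show ?thesis
  proof (cases "k \<le> m")
    case True
    have n: "nat (int m + 1 - j) = m - k" using k True by simp
    show ?thesis
    proof (cases "Suc k \<le> m")
      case True2: True
      then show ?thesis unfolding e n using True by (simp add: qb_form2 del: qb.simps)
    next
      case False2: False
      then have "qb m (Suc k) = 0" by (intro qb_zero) simp
      then show ?thesis unfolding e n using True False2 by (simp add: qb_form2 del: qb.simps)
    qed
  next
    case False
    then show ?thesis unfolding e by (simp add: qb_zero)
  qed
qed

lemma qbi_3: "qbi (Suc (Suc m)) j = fps_X^(2 * nat (int m + 2 - j)) * qbi m (j - 2)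
   + (1 + fps_X^(2 * (m + 1))) * qbi m (j - 1) + fps_X^(2 * nat j) * qbi m j"
proof -
  have "qbi (Suc (Suc m)) j = fps_X^(2 * nat (int m + 2 - j)) * qbi (Suc m) (j - 1) + qbi (Suc m) j"
    using qbi_f2[of "Suc m" j] by (simp add: add.commute)
  also have "qbi (Suc m) (j - 1) = qbi m (j - 2) + fps_X^(2 * nat (j - 1)) * qbi m (j - 1)"
    using qbi_f1[of m "j - 1"] by simp
  also have "qbi (Suc m) j = qbi m (j - 1) + fps_X^(2 * nat j) * qbi m j"
    by (rule qbi_f1)
  also have "fps_X^(2 * nat (int m + 2 - j)) * (fps_X^(2 * nat (j - 1)) * qbi m (j - 1))
      = fps_X^(2 * (m + 1)) * qbi m (j - 1)"
  proof (cases "qbi m (j - 1) = 0")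
    case True
    then show ?thesis by simp
  next
    case False
    then have h: "0 \<le> j - 1 \<and> j - 1 \<le> int m" by (rule qbi_nz)
    define t where "t = nat (j - 1)"
    have jt: "j = int t + 1" "t \<le> m" using h by (auto simp: t_def)
    have "int m + 2 - j = int (m + 1 - t)" using jt by simp
    then have "nat (int m + 2 - j) = m + 1 - t" by simp
    moreover have "nat (j - 1) = t" by (simp add: t_def)
    ultimately have "2 * nat (int m + 2 - j) + 2 * nat (j - 1) = 2 * (m + 1)" using jt by simp
    then show ?thesis by (simp add: mult.assoc flip: power_add)
  qed
  ultimately show ?thesis
    by (simp add: algebra_simps)
qed


definition cj :: "nat \<Rightarrow> int \<Rightarrow> int fps" where
  "cj n k = fps_X^(nat (k^2)) * qbi (2*n) (int n + k)"

definition sg :: "int \<Rightarrow> int fps" where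
  "sg k = (if even k then 1 else -1)"

definition EJ :: "nat \<Rightarrow> int fps" where
  "EJ n = (\<Sum>k\<in>{-int n..int n}. sg k * cj n k)"

lemma sg_plus1: "sg (k + 1) = - sg k"
  by (simp add: sg_def)

lemma sg_minus1: "sg (k - 1) = - sg k"
  by (simp add: sg_def)

lemma cj_out: "k < - int n \<or> k > int n \<Longrightarrow> cj n k = 0"
  by (auto simp: cj_def qbi_def)

lemma sum_shift_int:
  fixes f :: "int \<Rightarrow> 'a::comm_monoid_add"
  shows "(\<Sum>k\<in>{a..b}. f (k + d)) = (\<Sum>k\<in>{a+d..b+d}. f k)"
  by (rule sum.reindex_bij_witness[of _ "\<lambda>k. k - d" "\<lambda>k. k + d"]) auto

lemma EJ_ext:
  assumes "a \<le> - int n" "int n \<le> b"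
  shows "(\<Sum>k\<in>{a..b}. sg k * cj n k) = EJ n"
  unfolding EJ_def
proof (rule sum.mono_neutral_right)
  show "\<forall>k\<in>{a..b} - {- int n..int n}. sg k * cj n k = 0" using cj_out by auto
qed (use assms in auto)

lemma exp1:
  assumes "0 \<le> int n + k - 1" "int n + k - 1 \<le> 2 * int n"
  shows "nat (k^2) + 2 * nat (int n + 1 - k) = 2*n + 1 + nat ((k - 1)^2)"
proof -
  have h: "0 \<le> int n + 1 - k" using assms by linarith
  have "int (nat (k^2) + 2 * nat (int n + 1 - k)) = k^2 + 2 * (int n + 1 - k)"
    using h by simp
  also have "\<dots> = int (2*n + 1) + (k - 1)^2"
    by (simp add: power2_eq_square algebra_simps)
  also have "\<dots> = int (2*n + 1 + nat ((k - 1)^2))"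
    by simp
  finally show ?thesis by (simp only: of_nat_eq_iff)
qed

lemma exp3:
  assumes "0 \<le> int n + k + 1"
  shows "nat (k^2) + 2 * nat (int n + 1 + k) = 2*n + 1 + nat ((k + 1)^2)"
proof -
  have h: "0 \<le> int n + 1 + k" using assms by linarith
  have "int (nat (k^2) + 2 * nat (int n + 1 + k)) = k^2 + 2 * (int n + 1 + k)"
    using h by simp
  also have "\<dots> = int (2*n + 1) + (k + 1)^2"
    by (simp add: power2_eq_square algebra_simps)
  also have "\<dots> = int (2*n + 1 + nat ((k + 1)^2))"
    by simp
  finally show ?thesis by (simp only: of_nat_eq_iff)
qed

lemma cj_rec: "cj (Suc n) k = fps_X^(2*n+1) * cj n (k - 1)
   + (1 + fps_X^(2*(2*n+1))) * cj n k + fps_X^(2*n+1) * cj n (k + 1)"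
proof -
  have Q3: "qbi (Suc (Suc (2*n))) (int (Suc n) + k) =
      fps_X^(2 * nat (int (2*n) + 2 - (int (Suc n) + k))) * qbi (2*n) (int (Suc n) + k - 2)
      + (1 + fps_X^(2 * (2*n + 1))) * qbi (2*n) (int (Suc n) + k - 1)
      + fps_X^(2 * nat (int (Suc n) + k)) * qbi (2*n) (int (Suc n) + k)"
    by (rule qbi_3)
  have a1: "int (Suc n) + k - 2 = int n + (k - 1)" by simp
  have a2: "int (Suc n) + k - 1 = int n + k" by simp
  have a3: "int (Suc n) + k = int n + (k + 1)" by simp
  have b1: "int (2*n) + 2 - (int (Suc n) + k) = int n + 1 - k" by simp
  have b3: "int (Suc n) + k = int n + 1 + k" by simp
  have t1: "fps_X^(nat (k^2)) * (fps_X^(2 * nat (int n + 1 - k)) * qbi (2*n) (int n + (k - 1)))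
        = fps_X^(2*n+1) * cj n (k - 1)"
  proof (cases "qbi (2*n) (int n + (k - 1)) = 0")
    case True
    then show ?thesis by (simp add: cj_def)
  next
    case False
    then have "0 \<le> int n + (k - 1) \<and> int n + (k - 1) \<le> int (2*n)" by (rule qbi_nz)
    then have "nat (k^2) + 2 * nat (int n + 1 - k) = 2*n + 1 + nat ((k - 1)^2)"
      by (intro exp1) auto
    then show ?thesis unfolding cj_def by (simp add: mult.assoc flip: power_add)
  qed
  have t3: "fps_X^(nat (k^2)) * (fps_X^(2 * nat (int n + 1 + k)) * qbi (2*n) (int n + (k + 1)))
        = fps_X^(2*n+1) * cj n (k + 1)"
  proof (cases "qbi (2*n) (int n + (k + 1)) = 0")
    case True
    then show ?thesis by (simp add: cj_def)
  next
    case False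
    then have "0 \<le> int n + (k + 1)" using qbi_nz by blast
    then have "nat (k^2) + 2 * nat (int n + 1 + k) = 2*n + 1 + nat ((k + 1)^2)"
      by (intro exp3) auto
    then show ?thesis unfolding cj_def by (simp add: mult.assoc flip: power_add)
  qed
  have "cj (Suc n) k = fps_X^(nat (k^2)) * qbi (Suc (Suc (2*n))) (int (Suc n) + k)"
    by (simp add: cj_def)
  also have "\<dots> = fps_X^(nat (k^2)) * (fps_X^(2 * nat (int n + 1 - k)) * qbi (2*n) (int n + (k - 1)))
      + (1 + fps_X^(2 * (2*n + 1))) * (fps_X^(nat (k^2)) * qbi (2*n) (int n + k))
      + fps_X^(nat (k^2)) * (fps_X^(2 * nat (int n + 1 + k)) * qbi (2*n) (int n + (k + 1)))"
    unfolding Q3 a1 a2 b1 unfolding b3[symmetric] a3 by (simp add: algebra_simps)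
  also have "\<dots> = fps_X^(2*n+1) * cj n (k - 1) + (1 + fps_X^(2*(2*n+1))) * cj n k
      + fps_X^(2*n+1) * cj n (k + 1)"
    unfolding t1 t3 by (simp add: cj_def)
  finally show ?thesis .
qed

lemma EJ_Suc: "EJ (Suc n) = (1 - fps_X^(2*n+1))^2 * EJ n"
proof -
  define \<alpha> :: "int fps" where "\<alpha> = fps_X^(2*n+1)"
  define \<beta> :: "int fps" where "\<beta> = 1 + fps_X^(2*(2*n+1))"
  let ?I = "{- int (Suc n)..int (Suc n)}"
  have "EJ (Suc n) = (\<Sum>k\<in>?I. sg k * (\<alpha> * cj n (k - 1) + \<beta> * cj n k + \<alpha> * cj n (k + 1)))"
    unfolding EJ_def \<alpha>_def \<beta>_def by (simp add: cj_rec)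
  also have "\<dots> = \<alpha> * (\<Sum>k\<in>?I. sg k * cj n (k + (-1))) + \<beta> * (\<Sum>k\<in>?I. sg k * cj n k)
       + \<alpha> * (\<Sum>k\<in>?I. sg k * cj n (k + 1))"
    by (simp add: sum.distrib sum_distrib_left algebra_simps)
  also have "(\<Sum>k\<in>?I. sg k * cj n (k + (-1))) = - EJ n"
  proof -
    have "(\<Sum>k\<in>?I. sg k * cj n (k + (-1))) = (\<Sum>k\<in>?I. (- sg (k + (-1))) * cj n (k + (-1)))"
      using sg_minus1 by simp
    also have "\<dots> = (\<Sum>k\<in>{- int (Suc n) + (-1)..int (Suc n) + (-1)}. (- sg k) * cj n k)"
      by (rule sum_shift_int)
    also have "\<dots> = - (\<Sum>k\<in>{- int (Suc n) + (-1)..int (Suc n) + (-1)}. sg k * cj n k)"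
      by (simp add: sum_negf)
    also have "\<dots> = - EJ n" by (subst EJ_ext) auto
    finally show ?thesis .
  qed
  also have "(\<Sum>k\<in>?I. sg k * cj n (k + 1)) = - EJ n"
  proof -
    have "(\<Sum>k\<in>?I. sg k * cj n (k + 1)) = (\<Sum>k\<in>?I. (- sg (k + 1)) * cj n (k + 1))"
      using sg_plus1 by simp
    also have "\<dots> = (\<Sum>k\<in>{- int (Suc n) + 1..int (Suc n) + 1}. (- sg k) * cj n k)"
      by (rule sum_shift_int)
    also have "\<dots> = - (\<Sum>k\<in>{- int (Suc n) + 1..int (Suc n) + 1}. sg k * cj n k)"
      by (simp add: sum_negf)
    also have "\<dots> = - EJ n" by (subst EJ_ext) auto
    finally show ?thesis .
  qed
  also have "(\<Sum>k\<in>?I. sg k * cj n k) = EJ n" by (rule EJ_ext) auto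
  also have "\<alpha> * - EJ n + \<beta> * EJ n + \<alpha> * - EJ n = (1 - \<alpha>)^2 * EJ n"
  proof -
    have "\<beta> = 1 + \<alpha>^2" unfolding \<alpha>_def \<beta>_def by (metis power_mult mult.commute)
    then show ?thesis by (simp add: power2_eq_square algebra_simps)
  qed
  finally show ?thesis unfolding \<alpha>_def .
qed

lemma EJ_0: "EJ 0 = 1"
  by (simp add: EJ_def sg_def cj_def qbi_def)

lemma JTP_finite: "EJ n = (\<Prod>j\<in>{1..n}. (1 - fps_X^(2*j - 1))^2)"
proof (induction n)
  case 0
  then show ?case by (simp add: EJ_0)
next
  case (Suc n)
  have "2 * Suc n - 1 = 2*n + 1" by simp
  then show ?case using Suc by (simp add: EJ_Suc mult.commute)
qed


lemma eqto_mono: "\<forall>i<(A::nat). P i \<Longrightarrow> B \<le> A \<Longrightarrow> \<forall>i<B. P i"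
  by auto

lemma qp_qb_eqto:
  assumes "t \<le> n"
  shows "\<forall>i<2 * Suc (n - t). (qp 0 n * qb (2*n) (n + t)) $ i = (1::int fps) $ i"
proof -
  have pr: "qp 0 (n - t) * qb (2*n) (n + t) = qp (n + t) (2*n)"
    using qb_prod[of "n + t" "2*n"] assms by simp
  have sp: "qp 0 (n - t) * qp (n - t) n = qp 0 n" by (rule qp_split) auto
  have "qp 0 n * qb (2*n) (n + t) = qp (n - t) n * qp (n + t) (2*n)"
    unfolding sp[symmetric] pr[symmetric] by (simp add: mult_ac)
  moreover have "\<forall>i<2 * Suc (n - t). (qp (n - t) n * qp (n + t) (2*n)) $ i = ((1::int fps) * 1) $ i"
  proof (rule eqto_mult)
    show "\<forall>i<2 * Suc (n - t). qp (n - t) n $ i = (1::int fps) $ i" by (rule qp_eqto1)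
    show "\<forall>i<2 * Suc (n - t). qp (n + t) (2*n) $ i = (1::int fps) $ i"
      by (rule eqto_mono[OF qp_eqto1]) simp
  qed
  ultimately show ?thesis by simp
qed

lemma qp_qbi_eqto:
  assumes "\<bar>k\<bar> \<le> int n"
  shows "\<forall>i<2 * Suc (n - nat \<bar>k\<bar>). (qp 0 n * qbi (2*n) (int n + k)) $ i = (1::int fps) $ i"
proof -
  define t where "t = nat \<bar>k\<bar>"
  have tn: "t \<le> n" using assms by (simp add: t_def)
  have "qbi (2*n) (int n + k) = qb (2*n) (n + t)"
  proof (cases "k \<ge> 0")
    case True
    then have "nat (int n + k) = n + t" by (simp add: t_def nat_add_distrib)
    then show ?thesis using assms True by (simp add: qbi_def)
  next
    case False
    then have e: "nat (int n + k) = n - t" using assms by (simp add: t_def)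
    have "qbi (2*n) (int n + k) = qb (2*n) (n - t)" using assms False e by (simp add: qbi_def)
    also have "\<dots> = qb (2*n) (2*n - (n - t))" using tn by (intro qb_sym) simp
    also have "2*n - (n - t) = n + t" using tn by simp
    finally show ?thesis .
  qed
  then show ?thesis using qp_qb_eqto[OF tn] unfolding t_def by simp
qed

lemma card_sq_bound:
  assumes "N \<le> n"
  shows "{k \<in> {- int n..int n}. nat (k^2) = N} = {k::int. k^2 = int N}"
proof (rule set_eqI, rule iffI)
  fix k assume "k \<in> {k \<in> {- int n..int n}. nat (k^2) = N}"
  then show "k \<in> {k::int. k^2 = int N}" by auto
next
  fix k :: int assume "k \<in> {k::int. k^2 = int N}"
  then have k: "k^2 = int N" by simp
  have "\<bar>k\<bar> \<le> k^2"
  proof (cases "k = 0")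
    case False
    then have "1 \<le> \<bar>k\<bar>" by linarith
    then have "\<bar>k\<bar> * 1 \<le> \<bar>k\<bar> * \<bar>k\<bar>" by (intro mult_left_mono) auto
    then show ?thesis by (simp add: power2_eq_square abs_mult_self_eq)
  qed simp
  then show "k \<in> {k \<in> {- int n..int n}. nat (k^2) = N}" using k assms by auto
qed

lemma EJ_coeff:
  assumes "N \<le> n"
  shows "(qp 0 n * EJ n) $ N = (-1)^N * int (card {k::int. k^2 = int N})"
proof -
  have trm: "(sg k * (fps_X^(nat (k^2)) * (qp 0 n * qbi (2*n) (int n + k)))) $ N
      = (if nat (k^2) = N then (if even k then 1 else -1) else 0)"
    if k: "k \<in> {- int n..int n}" for k
  proof -
    define A where "A = qp 0 n * qbi (2*n) (int n + k)"
    have ak: "\<bar>k\<bar> \<le> int n" using k by auto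
    have eq: "\<forall>i<2 * Suc (n - nat \<bar>k\<bar>). A $ i = (1::int fps) $ i"
      unfolding A_def by (rule qp_qbi_eqto[OF ak])
    have "(fps_X^(nat (k^2)) * A) $ N = (if nat (k^2) = N then 1 else 0)"
    proof (cases "nat (k^2) \<le> N")
      case True
      have "N - nat (k^2) < 2 * Suc (n - nat \<bar>k\<bar>)"
      proof -
        have "int (nat (k^2)) = k^2" by simp
        moreover have "int (nat \<bar>k\<bar>) = \<bar>k\<bar>" by simp
        moreover have "k^2 = \<bar>k\<bar>^2" by simp
        moreover have "0 \<le> (\<bar>k\<bar> - 1)^2" by simp
        ultimately have "int N - int (nat (k^2)) < 2 * (1 + int n - int (nat \<bar>k\<bar>))"
          using assms ak by (simp add: power2_eq_square algebra_simps)
        moreover have "int (N - nat (k^2)) = int N - int (nat (k^2))" using True by (simp add: of_nat_diff)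
        moreover have "nat \<bar>k\<bar> \<le> n" using ak by simp
        then have "int (2 * Suc (n - nat \<bar>k\<bar>)) = 2 * (1 + int n - int (nat \<bar>k\<bar>))" by (simp add: of_nat_diff)
        ultimately have "int (N - nat (k^2)) < int (2 * Suc (n - nat \<bar>k\<bar>))" by linarith
        then show ?thesis by (simp only: of_nat_less_iff)
      qed
      then have "A $ (N - nat (k^2)) = (1::int fps) $ (N - nat (k^2))" using eq by blast
      then show ?thesis using True by (auto simp: fps_X_power_mult_nth)
    next
      case False
      then show ?thesis by (simp add: fps_X_power_mult_nth)
    qed
    then show ?thesis unfolding A_def sg_def by auto
  qed
  have "(qp 0 n * EJ n) $ N = (\<Sum>k\<in>{- int n..int n}. (sg k * (fps_X^(nat (k^2)) * (qp 0 n * qbi (2*n) (int n + k)))) $ N)"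
    unfolding EJ_def cj_def by (simp add: sum_distrib_left fps_sum_nth mult_ac)
  also have "\<dots> = (\<Sum>k\<in>{- int n..int n}. (if nat (k^2) = N then (if even k then 1 else -1) else 0))"
    by (rule sum.cong) (auto simp: trm)
  also have "\<dots> = (\<Sum>k\<in>{k \<in> {- int n..int n}. nat (k^2) = N}. (if even k then 1 else -1))"
    by (rule sum.inter_filter[symmetric]) simp
  also have "\<dots> = (\<Sum>k\<in>{k::int. k^2 = int N}. (if even k then 1 else -1))"
    using card_sq_bound[OF assms] by simp
  also have "\<dots> = (\<Sum>k\<in>{k::int. k^2 = int N}. (-1)^N)"
  proof (rule sum.cong[OF refl])
    fix k :: int assume "k \<in> {k::int. k^2 = int N}"
    then have "k^2 = int N" by simp
    then have "even k = even N" by (metis even_of_nat even_power zero_less_numeral)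
    then show "(if even k then 1 else -1) = ((-1)^N :: int)" by simp
  qed
  also have "\<dots> = (-1)^N * int (card {k::int. k^2 = int N})" by simp
  finally show ?thesis .
qed

lemma prod_2n: "(\<Prod>k\<in>{1..2*n}. (1 - fps_X^k :: int fps)) = (\<Prod>j\<in>{1..n}. (1 - fps_X^(2*j - 1))) * qp 0 n"
proof (induction n)
  case 0
  then show ?case by (simp add: qp_def)
next
  case (Suc n)
  have "{1..2 * Suc n} = insert (2*n+2) (insert (2*n+1) {1..2*n})" by auto
  then have "(\<Prod>k\<in>{1..2*Suc n}. (1 - fps_X^k :: int fps)) = (1 - fps_X^(2*n+2)) * ((1 - fps_X^(2*n+1)) * (\<Prod>k\<in>{1..2*n}. (1 - fps_X^k)))"
    by simp
  also have "\<dots> = (\<Prod>j\<in>{1..Suc n}. (1 - fps_X^(2*j - 1))) * qp 0 (Suc n)"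
    unfolding Suc by (simp add: qp_Suc mult_ac)
  finally show ?case .
qed

lemma EJ_sq: "qp 0 n * EJ n * qp 0 n = (\<Prod>k\<in>{1..2*n}. (1 - fps_X^k :: int fps))^2"
  unfolding prod_2n JTP_finite by (simp add: power2_eq_square prod.distrib mult_ac)


lemma eqto_cancel:
  fixes D E F :: "int fps"
  assumes d0: "D $ 0 = 1" and h: "\<forall>i<M. (D * E) $ i = (D * F) $ i"
  shows "\<forall>i<M. E $ i = F $ i"
proof -
  define H where "H = E - F"
  have hz: "\<forall>i<M. (D * H) $ i = 0" using h by (simp add: H_def algebra_simps)
  have "\<forall>i. i < M \<longrightarrow> H $ i = 0"
  proof (rule allI, induct_tac i rule: less_induct)
    fix i assume IH: "\<And>j. j < i \<Longrightarrow> j < M \<longrightarrow> H $ j = 0"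
    show "i < M \<longrightarrow> H $ i = 0"
    proof
      assume iM: "i < M"
      have "(D * H) $ i = (\<Sum>j=0..i. D $ j * H $ (i - j))" by (simp add: fps_mult_nth)
      also have "\<dots> = D $ 0 * H $ i + (\<Sum>j=Suc 0..i. D $ j * H $ (i - j))"
        by (simp add: sum.atLeast_Suc_atMost)
      also have "(\<Sum>j=Suc 0..i. D $ j * H $ (i - j)) = 0"
      proof (rule sum.neutral, rule ballI)
        fix j assume "j \<in> {Suc 0..i}"
        then have "i - j < i" "i - j < M" using iM by auto
        then show "D $ j * H $ (i - j) = 0" using IH by simp
      qed
      finally have "(D * H) $ i = H $ i" using d0 by simp
      then show "H $ i = 0" using hz iM by simp
    qed
  qed
  then show ?thesis by (simp add: H_def)
qed

definition Hs :: "nat \<Rightarrow> int fps" where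
  "Hs a = Abs_fps (\<lambda>i. if i = 0 then 1 else if a dvd i then 2 else 0)"

definition Pm :: "nat \<Rightarrow> int fps" where
  "Pm m = Abs_fps (\<lambda>n. int (opm n m))"

lemma Pm_0: "Pm 0 = 1"
  by (rule fps_ext) (simp add: Pm_def opm_0)

lemma Pm_Suc: "Pm (Suc m) = Pm m * Hs (Suc m)"
proof (rule fps_ext)
  fix n
  have "(Pm m * Hs (Suc m)) $ n = (Hs (Suc m) * Pm m) $ n" by (simp add: mult.commute)
  also have "\<dots> = (\<Sum>i=0..n. Hs (Suc m) $ i * Pm m $ (n - i))" by (simp add: fps_mult_nth)
  also have "\<dots> = (\<Sum>i=0..n. int ((if i = 0 then 1 else if Suc m dvd i then 2 else 0) * opm (n - i) m))"
    by (rule sum.cong) (auto simp: Hs_def Pm_def)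
  also have "\<dots> = int (\<Sum>i=0..n. (if i = 0 then 1 else if Suc m dvd i then 2 else 0) * opm (n - i) m)"
    by (simp only: of_nat_sum)
  also have "\<dots> = Pm (Suc m) $ n" by (simp add: Pm_def opm_Suc)
  finally show "Pm (Suc m) $ n = (Pm m * Hs (Suc m)) $ n" by simp
qed

lemma Hs_mult:
  assumes "a \<ge> 1"
  shows "Hs a * (1 - fps_X^a) = 1 + fps_X^a"
proof (rule fps_ext)
  fix n
  have L: "(Hs a * (1 - fps_X^a)) $ n = Hs a $ n - (if a \<le> n then Hs a $ (n - a) else 0)"
    by (simp add: algebra_simps fps_X_power_mult_right_nth)
  show "(Hs a * (1 - fps_X^a)) $ n = (1 + fps_X^a :: int fps) $ n"
  proof (cases "n = 0")
    case True
    then show ?thesis unfolding L using assms by (simp add: Hs_def)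
  next
    case False
    show ?thesis
    proof (cases "a \<le> n")
      case True
      show ?thesis
      proof (cases "n = a")
        case True
        then show ?thesis unfolding L using assms by (simp add: Hs_def)
      next
        case False2: False
        have "a dvd n \<longleftrightarrow> a dvd (n - a)" using True by (simp add: dvd_minus_self)
        moreover have "n - a \<noteq> 0" using True False2 by simp
        ultimately show ?thesis unfolding L using True False False2 by (simp add: Hs_def)
      qed
    next
      case False2: False
      then have "\<not> a dvd n" using \<open>n \<noteq> 0\<close> by (auto dest: dvd_imp_le)
      then show ?thesis unfolding L using False False2 by (simp add: Hs_def)
    qed
  qed
qed

definition Dm :: "nat \<Rightarrow> int fps" where "Dm m = (\<Prod>k\<in>{1..m}. (1 - fps_X^k))"
definition Dp :: "nat \<Rightarrow> int fps" where "Dp m = (\<Prod>k\<in>{1..m}. (1 + fps_X^k))"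

lemma Pm_Dm: "Pm m * Dm m = Dp m"
proof (induction m)
  case 0
  then show ?case by (simp add: Pm_0 Dm_def Dp_def)
next
  case (Suc m)
  have "Pm (Suc m) * Dm (Suc m) = (Pm m * Dm m) * (Hs (Suc m) * (1 - fps_X^(Suc m)))"
    by (simp add: Pm_Suc Dm_def mult_ac)
  also have "\<dots> = Dp m * (1 + fps_X^(Suc m))"
  proof -
    have "Hs (Suc m) * (1 - fps_X^(Suc m)) = 1 + fps_X^(Suc m)" by (rule Hs_mult) simp
    then show ?thesis using Suc by (simp only:)
  qed
  also have "\<dots> = Dp (Suc m)" by (simp add: Dp_def)
  finally show ?case .
qed

lemma qp_DmDp: "qp 0 m = Dm m * Dp m"
proof -
  have "qp 0 m = (\<Prod>k\<in>{1..m}. (1 - fps_X^k) * (1 + fps_X^k))"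
    unfolding qp_def by (rule prod.cong) (auto simp: algebra_simps power_mult[symmetric] mult.commute power2_eq_square simp flip: power_add)
  then show ?thesis by (simp add: Dm_def Dp_def prod.distrib)
qed

lemma Dm_0th: "Dm m $ 0 = 1"
  by (induction m) (simp_all add: Dm_def)

lemma Dp_0th: "Dp m $ 0 = 1"
  by (induction m) (simp_all add: Dp_def)

lemma prod_eqto1:
  assumes "\<forall>k\<in>A. M \<le> k"
  shows "\<forall>i<M. (\<Prod>k\<in>A. (1 - fps_X^k :: int fps)) $ i = (1::int fps) $ i"
  using assms
proof (induction A rule: infinite_finite_induct)
  case (insert x F)
  have "\<forall>i<M. ((1 - fps_X^x) * (\<Prod>k\<in>F. (1 - fps_X^k :: int fps))) $ i = ((1::int fps) * 1) $ i"
    by (rule eqto_mult) (use insert in \<open>auto intro: one_minus_X_eqto\<close>)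
  then show ?case using insert by simp
qed auto

lemma prod2m_eqto: "\<forall>i<Suc m. (\<Prod>k\<in>{1..2*m}. (1 - fps_X^k :: int fps)) $ i = Dm m $ i"
proof -
  have sp: "(\<Prod>k\<in>{1..2*m}. (1 - fps_X^k :: int fps)) = Dm m * (\<Prod>k\<in>{Suc m..2*m}. (1 - fps_X^k))"
  proof -
    have "{1..2*m} = {1..m} \<union> {Suc m..2*m}" by auto
    moreover have "{1..m} \<inter> {Suc m..2*m} = {}" by auto
    ultimately show ?thesis unfolding Dm_def by (simp add: prod.union_disjoint)
  qed
  have r: "\<forall>i<Suc m. (\<Prod>k\<in>{Suc m..2*m}. (1 - fps_X^k :: int fps)) $ i = (1::int fps) $ i"
    by (rule prod_eqto1) auto
  have "\<forall>i<Suc m. (Dm m * (\<Prod>k\<in>{Suc m..2*m}. (1 - fps_X^k :: int fps))) $ i = (Dm m * 1) $ i"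
    by (rule eqto_mult) (simp, rule r)
  then show ?thesis unfolding sp by simp
qed

definition thn :: "int fps" where
  "thn = Abs_fps (\<lambda>N. (-1)^N * int (card {k::int. k^2 = int N}))"

lemma thn_Dp: "\<forall>i<Suc m. (thn * Dp m) $ i = Dm m $ i"
proof -
  have t: "\<forall>i<Suc m. thn $ i = (qp 0 m * EJ m) $ i"
    by (auto simp: thn_def EJ_coeff)
  have a: "\<forall>i<Suc m. (thn * qp 0 m) $ i = (qp 0 m * EJ m * qp 0 m) $ i"
    by (rule eqto_mult[OF t]) simp
  have b: "\<forall>i<Suc m. ((\<Prod>k\<in>{1..2*m}. (1 - fps_X^k :: int fps)) * (\<Prod>k\<in>{1..2*m}. (1 - fps_X^k :: int fps))) $ i
      = (Dm m * Dm m) $ i"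
    by (rule eqto_mult[OF prod2m_eqto prod2m_eqto])
  have "\<forall>i<Suc m. (Dm m * (thn * Dp m)) $ i = (Dm m * Dm m) $ i"
  proof (intro allI impI)
    fix i assume i: "i < Suc m"
    have "(Dm m * (thn * Dp m)) $ i = (thn * qp 0 m) $ i" by (simp add: qp_DmDp mult_ac)
    also have "\<dots> = (qp 0 m * EJ m * qp 0 m) $ i" using a i by blast
    also have "\<dots> = ((\<Prod>k\<in>{1..2*m}. (1 - fps_X^k :: int fps)) * (\<Prod>k\<in>{1..2*m}. (1 - fps_X^k :: int fps))) $ i"
      by (simp add: EJ_sq power2_eq_square)
    also have "\<dots> = (Dm m * Dm m) $ i" using b i by blast
    finally show "(Dm m * (thn * Dp m)) $ i = (Dm m * Dm m) $ i" .
  qed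
  then show ?thesis by (rule eqto_cancel[OF Dm_0th])
qed

lemma Pm_thn: "\<forall>i<Suc m. (Pm m * thn) $ i = (1::int fps) $ i"
proof -
  have "\<forall>i<Suc m. (Pm m * (thn * Dp m)) $ i = (Pm m * Dm m) $ i"
    by (rule eqto_mult[OF _ thn_Dp]) simp
  moreover have "Dp m * (Pm m * thn) = Pm m * (thn * Dp m)" by (simp add: mult_ac)
  ultimately have "\<forall>i<Suc m. (Dp m * (Pm m * thn)) $ i = (Dp m * 1) $ i"
    by (simp only: Pm_Dm mult_1_right)
  then show ?thesis by (rule eqto_cancel[OF Dp_0th])
qed

lemma opm_stable:
  assumes "i \<le> m" shows "opm i m = pbar i"
proof -
  have "OP i m = OP i i"
  proof (rule set_eqI, rule iffI)
    fix p assume "p \<in> OP i m"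
    then obtain M S where p: "p = (M,S)" "\<forall>x\<in>#M. 0 < x \<and> x \<le> m" "sum_mset M = i" "S \<subseteq> set_mset M"
      by (auto simp: OP_def)
    have "\<forall>x\<in>#M. x \<le> i" using p(3) by (metis sum_mset.remove le_add1)
    then show "p \<in> OP i i" using p by (auto simp: OP_def)
  next
    fix p assume "p \<in> OP i i"
    then show "p \<in> OP i m" using assms by (auto simp: OP_def)
  qed
  then show ?thesis by (simp add: opm_def pbar_opm)
qed

lemma sign_aux: "i \<le> n \<Longrightarrow> (-1::int)^n * (-1)^(n - i) = (-1)^i"
proof -
  assume "i \<le> n"
  then have "(-1::int)^n = (-1)^i * (-1)^(n - i)" by (simp flip: power_add)
  then have "(-1::int)^n * (-1)^(n - i) = (-1)^i * ((-1)^(n - i) * (-1)^(n - i))" by (simp add: mult_ac)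
  also have "(-1::int)^(n - i) * (-1)^(n - i) = 1" by (simp flip: power_add)
  finally show ?thesis by simp
qed

lemma gauss_card:
  "(\<Sum>i=0..n. (-1)^i * int (pbar i) * int (card {x::int. x^2 = int (n - i)})) = (if n = 0 then 1 else 0)"
proof -
  have "(Pm n * thn) $ n = (\<Sum>i=0..n. Pm n $ i * thn $ (n - i))" by (simp add: fps_mult_nth)
  also have "\<dots> = (\<Sum>i=0..n. int (pbar i) * ((-1)^(n - i) * int (card {x::int. x^2 = int (n - i)})))"
  proof (rule sum.cong[OF refl])
    fix i assume "i \<in> {0..n}"
    then have "opm i n = pbar i" by (intro opm_stable) simp
    then show "Pm n $ i * thn $ (n - i) = int (pbar i) * ((-1)^(n - i) * int (card {x::int. x^2 = int (n - i)}))"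
      by (simp add: Pm_def thn_def)
  qed
  finally have e1: "(Pm n * thn) $ n = (\<Sum>i=0..n. int (pbar i) * ((-1)^(n - i) * int (card {x::int. x^2 = int (n - i)})))" .
  have "(Pm n * thn) $ n = (1::int fps) $ n" using Pm_thn by blast
  then have e: "(\<Sum>i=0..n. int (pbar i) * ((-1)^(n - i) * int (card {x::int. x^2 = int (n - i)}))) = (if n = 0 then 1 else 0)"
    using e1 by simp
  have "(\<Sum>i=0..n. (-1)^i * int (pbar i) * int (card {x::int. x^2 = int (n - i)}))
      = (\<Sum>i=0..n. (-1)^n * (int (pbar i) * ((-1)^(n - i) * int (card {x::int. x^2 = int (n - i)}))))"
  proof (rule sum.cong[OF refl])
    fix i assume "i \<in> {0..n}"
    then have s: "(-1::int)^n * (-1)^(n - i) = (-1)^i" by (intro sign_aux) simp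
    show "(-1)^i * int (pbar i) * int (card {x::int. x^2 = int (n - i)})
        = (-1)^n * (int (pbar i) * ((-1)^(n - i) * int (card {x::int. x^2 = int (n - i)})))"
      by (subst s[symmetric]) (simp only: mult_ac)
  qed
  also have "\<dots> = (-1)^n * (\<Sum>i=0..n. int (pbar i) * ((-1)^(n - i) * int (card {x::int. x^2 = int (n - i)})))"
    by (simp only: sum_distrib_left)
  also have "\<dots> = (if n = 0 then 1 else 0)" unfolding e by simp
  finally show ?thesis .
qed


lemma gauss: "(\<Sum>i=0..n. (-1)^i * int (pbar i) * int (r1 (n - i))) = (if n = 0 then 1 else 0)"
  unfolding r1_def by (rule gauss_card)

definition Gs :: "5 fps" where "Gs = Abs_fps (\<lambda>n. of_int ((-1)^n * int (pbar n)))"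

lemma Gs_Th: "Gs * Th = 1"
proof (rule fps_ext)
  fix n
  have "(Gs * Th) $ n = of_int (\<Sum>i=0..n. (-1)^i * int (pbar i) * int (r1 (n - i)))"
    by (simp add: fps_mult_nth Gs_def Th_def of_int_sum)
  also have "\<dots> = (1 :: 5 fps) $ n" using gauss[of n] by simp
  finally show "(Gs * Th) $ n = (1 :: 5 fps) $ n" .
qed

lemma c5_fps: "(5 :: 5 fps) = 0"
  by simp

lemmas core5 = core_alg[OF c5_fps Th_h0 Th_h23[of 2] Th_h23[of 3] Th_hL frob5 Gs_Th, simplified]

lemma W_nth: "((Th :: 5 fps)^3) $ (25 * m) = sect 0 (sect 0 ((Th :: 5 fps)^3)) $ m"
  by (simp add: sect_nth mult.assoc)

lemma T3_zero:
  assumes "r = 1 \<or> r = 4" and "a \<ge> 1"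
  shows "((Th :: 5 fps)^3) $ (5^(2*a) * (5*n + r)) = 0"
  using assms(2)
proof (induction a rule: dec_induct)
  case base
  have "((Th :: 5 fps)^3) $ (5^(2*1) * (5*n + r)) = sect 0 (sect 0 ((Th :: 5 fps)^3)) $ (5*n + r)"
    using W_nth[of "5*n+r"] by simp
  also have "\<dots> = sect r (sect 0 (sect 0 ((Th :: 5 fps)^3))) $ n" by (simp add: sect_nth)
  also have "\<dots> = 0" using assms(1) core5 by auto
  finally show ?case .
next
  case (step a)
  define K where "K = 5^(2*a) * (5*n + r)"
  obtain b where ab: "a = Suc b" using step(1) by (cases a) auto
  define K' where "K' = 5^(2*b+1) * (5*n + r)"
  have K: "K = 5 * K'" unfolding K_def K'_def ab by simp
  have e: "5^(2 * Suc a) * (5*n + r) = 25 * K" unfolding K_def by simp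
  have "((Th :: 5 fps)^3) $ (5^(2 * Suc a) * (5*n + r)) = sect 0 (sect 0 ((Th :: 5 fps)^3)) $ K"
    unfolding e by (rule W_nth)
  also have "\<dots> = sect 0 (sect 0 (sect 0 ((Th :: 5 fps)^3))) $ K'" unfolding K by (simp add: sect_nth)
  also have "\<dots> = sect 0 ((Th :: 5 fps)^3) $ K'" using core5 by simp
  also have "\<dots> = ((Th :: 5 fps)^3) $ K" unfolding K by (simp add: sect_nth)
  also have "\<dots> = 0" using step(3) unfolding K_def .
  finally show ?case .
qed

lemma pbar_mod5:
  assumes "r = 1 \<or> r = 4" "a \<ge> 1"
  shows "pbar (5^(2*a+1) * (5*n+r)) mod 5 = 0"
proof -
  define M where "M = 5^(2*a) * (5*n+r)"
  have N: "5^(2*a+1) * (5*n+r) = 5 * M" unfolding M_def by simp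
  have "Gs $ (5 * M) = sect 0 Gs $ M" by (simp add: sect_nth)
  also have "\<dots> = ((Th :: 5 fps)^3) $ M" using core5 by simp
  also have "\<dots> = 0" unfolding M_def by (rule T3_zero[OF assms])
  finally have h: "of_int ((-1)^(5*M) * int (pbar (5*M))) = (0::5)" by (simp add: Gs_def)
  have "(of_nat (pbar (5*M)) :: 5) = 0"
  proof (cases "even (5*M)")
    case True
    then show ?thesis using h by simp
  next
    case False
    then show ?thesis using h by simp
  qed
  then have "CHAR(5) dvd pbar (5*M)" by (simp only: of_nat_eq_0_iff_char_dvd)
  then show ?thesis unfolding N by simp
qed

theorem theorem3:
  fixes \<alpha> n :: nat
  assumes "\<alpha> \<ge> 1"
  shows "pbar (5 ^ (2 * \<alpha> + 1) * (5 * n + 1)) mod 5 = 0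
       \<and> pbar (5 ^ (2 * \<alpha> + 1) * (5 * n + 4)) mod 5 = 0"
  using pbar_mod5[of 1 \<alpha> n] pbar_mod5[of 4 \<alpha> n] assms by simp


end
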